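(* 1. $W_v(P_4)=2$ and $D_v(P_4)=3$. 2. $D_\kappa(C_4)=4$ and $W_\kappa(C_4)\ge 3$.
   Context: Graphs are finite simple graphs; $P_4$ is the path on 4 vertices and $C_4$ the cycle on 4 vertices. A graph is $k$-connected if it has more than $k$ vertices, is connected, and remains connected after removal of any $k-1$ vertices; $\kappa(G)$ is the maximum $k$ such that $G$ is $k$-connected; $v(G)$ is the number of vertices. We use first-order logic of graphs with relation symbols for adjacency and equality only; the variable width of a sentence is the number of distinct variables it uses. For a graph parameter $\pi\in\{v,\kappa\}$, $D_\pi(F)$ (resp. $W_\pi(F)$) is the minimum quantifier depth (resp. variable width) of a first-order sentence $\Phi$ for which there is an integer $k$ such that for every connected graph $G$ with $\pi(G)\ge k$, $G\models\Phi$ if and only if $G$ contains a (not necessarily induced) subgraph isomorphic to $F$. *)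

theory Defs
  imports Main
begin

type_synonym graph = "nat set \<times> (nat \<Rightarrow> nat \<Rightarrow> bool)"

definition verts :: "graph \<Rightarrow> nat set" where "verts G = fst G"
definition adj :: "graph \<Rightarrow> nat \<Rightarrow> nat \<Rightarrow> bool" where "adj G = snd G"

definition wf_graph :: "graph \<Rightarrow> bool" where
  "wf_graph G \<longleftrightarrow> finite (verts G)
     \<and> (\<forall>u w. adj G u w \<longrightarrow> u \<in> verts G \<and> w \<in> verts G)
     \<and> (\<forall>u w. adj G u w \<longrightarrow> adj G w u)
     \<and> (\<forall>u. \<not> adj G u u)"

definition edge_rel :: "graph \<Rightarrow> (nat \<times> nat) set" where
  "edge_rel G = {(u, w). u \<in> verts G \<and> w \<in> verts G \<and> adj G u w}"

definition connected :: "graph \<Rightarrow> bool" where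
  "connected G \<longleftrightarrow> verts G \<noteq> {}
     \<and> (\<forall>u\<in>verts G. \<forall>w\<in>verts G. (u, w) \<in> (edge_rel G)\<^sup>*)"

definition del_verts :: "graph \<Rightarrow> nat set \<Rightarrow> graph" where
  "del_verts G S = (verts G - S, \<lambda>u w. adj G u w \<and> u \<notin> S \<and> w \<notin> S)"

definition k_connected :: "nat \<Rightarrow> graph \<Rightarrow> bool" where
  "k_connected k G \<longleftrightarrow> card (verts G) > k \<and> connected G
     \<and> (\<forall>S. S \<subseteq> verts G \<and> card S < k \<longrightarrow> connected (del_verts G S))"

definition kappa :: "graph \<Rightarrow> nat" where
  "kappa G = (GREATEST k. k_connected k G)"

definition nverts :: "graph \<Rightarrow> nat" where
  "nverts G = card (verts G)"

text \<open>Not necessarily induced subgraph containment: injective edge-preserving map.\<close>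
definition contains_subgraph :: "graph \<Rightarrow> graph \<Rightarrow> bool" where
  "contains_subgraph G F \<longleftrightarrow> (\<exists>f. inj_on f (verts F) \<and> f ` verts F \<subseteq> verts G
     \<and> (\<forall>u\<in>verts F. \<forall>w\<in>verts F. adj F u w \<longrightarrow> adj G (f u) (f w)))"

definition P4 :: graph where
  "P4 = ({0,1,2,3}, \<lambda>u w. (u,w) \<in> {(0,1),(1,0),(1,2),(2,1),(2,3),(3,2)})"

definition C4 :: graph where
  "C4 = ({0,1,2,3}, \<lambda>u w. (u,w) \<in> {(0,1),(1,0),(1,2),(2,1),(2,3),(3,2),(3,0),(0,3)})"

datatype fo =
    Adj nat nat
  | Eq nat nat
  | Neg fo
  | Conj fo fo
  | Disj fo fo
  | Impl fo fo
  | Iff fo fo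
  | Ex nat fo
  | All nat fo

fun sat :: "graph \<Rightarrow> (nat \<Rightarrow> nat) \<Rightarrow> fo \<Rightarrow> bool" where
  "sat G a (Adj x y) = adj G (a x) (a y)"
| "sat G a (Eq x y) = (a x = a y)"
| "sat G a (Neg \<phi>) = (\<not> sat G a \<phi>)"
| "sat G a (Conj \<phi> \<psi>) = (sat G a \<phi> \<and> sat G a \<psi>)"
| "sat G a (Disj \<phi> \<psi>) = (sat G a \<phi> \<or> sat G a \<psi>)"
| "sat G a (Impl \<phi> \<psi>) = (sat G a \<phi> \<longrightarrow> sat G a \<psi>)"
| "sat G a (Iff \<phi> \<psi>) = (sat G a \<phi> \<longleftrightarrow> sat G a \<psi>)"
| "sat G a (Ex x \<phi>) = (\<exists>v\<in>verts G. sat G (a(x := v)) \<phi>)"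
| "sat G a (All x \<phi>) = (\<forall>v\<in>verts G. sat G (a(x := v)) \<phi>)"

fun free_vars :: "fo \<Rightarrow> nat set" where
  "free_vars (Adj x y) = {x, y}"
| "free_vars (Eq x y) = {x, y}"
| "free_vars (Neg \<phi>) = free_vars \<phi>"
| "free_vars (Conj \<phi> \<psi>) = free_vars \<phi> \<union> free_vars \<psi>"
| "free_vars (Disj \<phi> \<psi>) = free_vars \<phi> \<union> free_vars \<psi>"
| "free_vars (Impl \<phi> \<psi>) = free_vars \<phi> \<union> free_vars \<psi>"
| "free_vars (Iff \<phi> \<psi>) = free_vars \<phi> \<union> free_vars \<psi>"
| "free_vars (Ex x \<phi>) = free_vars \<phi> - {x}"
| "free_vars (All x \<phi>) = free_vars \<phi> - {x}"

fun vars :: "fo \<Rightarrow> nat set" where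
  "vars (Adj x y) = {x, y}"
| "vars (Eq x y) = {x, y}"
| "vars (Neg \<phi>) = vars \<phi>"
| "vars (Conj \<phi> \<psi>) = vars \<phi> \<union> vars \<psi>"
| "vars (Disj \<phi> \<psi>) = vars \<phi> \<union> vars \<psi>"
| "vars (Impl \<phi> \<psi>) = vars \<phi> \<union> vars \<psi>"
| "vars (Iff \<phi> \<psi>) = vars \<phi> \<union> vars \<psi>"
| "vars (Ex x \<phi>) = insert x (vars \<phi>)"
| "vars (All x \<phi>) = insert x (vars \<phi>)"

fun qdepth :: "fo \<Rightarrow> nat" where
  "qdepth (Adj x y) = 0"
| "qdepth (Eq x y) = 0"
| "qdepth (Neg \<phi>) = qdepth \<phi>"
| "qdepth (Conj \<phi> \<psi>) = max (qdepth \<phi>) (qdepth \<psi>)"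
| "qdepth (Disj \<phi> \<psi>) = max (qdepth \<phi>) (qdepth \<psi>)"
| "qdepth (Impl \<phi> \<psi>) = max (qdepth \<phi>) (qdepth \<psi>)"
| "qdepth (Iff \<phi> \<psi>) = max (qdepth \<phi>) (qdepth \<psi>)"
| "qdepth (Ex x \<phi>) = Suc (qdepth \<phi>)"
| "qdepth (All x \<phi>) = Suc (qdepth \<phi>)"

definition width :: "fo \<Rightarrow> nat" where
  "width \<phi> = card (vars \<phi>)"

definition sentence :: "fo \<Rightarrow> bool" where
  "sentence \<phi> \<longleftrightarrow> free_vars \<phi> = {}"

definition models :: "graph \<Rightarrow> fo \<Rightarrow> bool" where
  "models G \<phi> \<longleftrightarrow> (\<forall>a. sat G a \<phi>)"

definition eventually_defines :: "(graph \<Rightarrow> nat) \<Rightarrow> graph \<Rightarrow> fo \<Rightarrow> bool" where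
  "eventually_defines \<pi> F \<Phi> \<longleftrightarrow> sentence \<Phi> \<and> (\<exists>k. \<forall>G. wf_graph G \<and> connected G \<and> \<pi> G \<ge> k
      \<longrightarrow> (models G \<Phi> \<longleftrightarrow> contains_subgraph G F))"

definition D_param :: "(graph \<Rightarrow> nat) \<Rightarrow> graph \<Rightarrow> nat" where
  "D_param \<pi> F = (LEAST d. \<exists>\<Phi>. eventually_defines \<pi> F \<Phi> \<and> qdepth \<Phi> = d)"

definition W_param :: "(graph \<Rightarrow> nat) \<Rightarrow> graph \<Rightarrow> nat" where
  "W_param \<pi> F = (LEAST w. \<exists>\<Phi>. eventually_defines \<pi> F \<Phi> \<and> width \<Phi> = w)"

end

theory Submission
  imports Defs "HOL-Computational_Algebra.Primes"
begin


definition piso :: "graph \<Rightarrow> graph \<Rightarrow> (nat \<times> nat) set \<Rightarrow> bool" where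
  "piso G H P \<longleftrightarrow> P \<subseteq> verts G \<times> verts H \<and>
     (\<forall>u u' v v'. (u,u') \<in> P \<longrightarrow> (v,v') \<in> P \<longrightarrow> (u = v \<longleftrightarrow> u' = v') \<and> (adj G u v \<longleftrightarrow> adj H u' v'))"

fun win :: "nat \<Rightarrow> graph \<Rightarrow> graph \<Rightarrow> (nat \<times> nat) set \<Rightarrow> bool" where
  "win 0 G H P = piso G H P"
| "win (Suc m) G H P = (piso G H P \<and> (\<forall>v\<in>verts G. \<exists>w\<in>verts H. win m G H (insert (v,w) P))
        \<and> (\<forall>w\<in>verts H. \<exists>v\<in>verts G. win m G H (insert (v,w) P)))"

lemma win_piso: "win m G H P \<Longrightarrow> piso G H P"
  by (cases m) auto

lemma depth_lemma:
  "win m G H P \<Longrightarrow> qdepth \<phi> \<le> m \<Longrightarrow> (\<lambda>x. (a x, b x)) ` free_vars \<phi> \<subseteq> P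
   \<Longrightarrow> sat G a \<phi> = sat H b \<phi>"
proof (induction \<phi> arbitrary: m a b P)
  case (Adj x y)
  then have "piso G H P" by (simp add: win_piso)
  with Adj show ?case by (auto simp: piso_def)
next
  case (Eq x y)
  then have "piso G H P" by (simp add: win_piso)
  with Eq show ?case by (auto simp: piso_def)
next
  case (Neg \<phi>) then show ?case by auto
next
  case (Conj \<phi>1 \<phi>2)
  have "sat G a \<phi>1 = sat H b \<phi>1" by (rule Conj.IH(1)[OF Conj.prems(1)]) (use Conj.prems in auto)
  moreover have "sat G a \<phi>2 = sat H b \<phi>2" by (rule Conj.IH(2)[OF Conj.prems(1)]) (use Conj.prems in auto)
  ultimately show ?case by simp
next
  case (Disj \<phi>1 \<phi>2)
  have "sat G a \<phi>1 = sat H b \<phi>1" by (rule Disj.IH(1)[OF Disj.prems(1)]) (use Disj.prems in auto)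
  moreover have "sat G a \<phi>2 = sat H b \<phi>2" by (rule Disj.IH(2)[OF Disj.prems(1)]) (use Disj.prems in auto)
  ultimately show ?case by simp
next
  case (Impl \<phi>1 \<phi>2)
  have "sat G a \<phi>1 = sat H b \<phi>1" by (rule Impl.IH(1)[OF Impl.prems(1)]) (use Impl.prems in auto)
  moreover have "sat G a \<phi>2 = sat H b \<phi>2" by (rule Impl.IH(2)[OF Impl.prems(1)]) (use Impl.prems in auto)
  ultimately show ?case by simp
next
  case (Iff \<phi>1 \<phi>2)
  have "sat G a \<phi>1 = sat H b \<phi>1" by (rule Iff.IH(1)[OF Iff.prems(1)]) (use Iff.prems in auto)
  moreover have "sat G a \<phi>2 = sat H b \<phi>2" by (rule Iff.IH(2)[OF Iff.prems(1)]) (use Iff.prems in auto)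
  ultimately show ?case by simp
next
  case (Ex z \<psi>)
  then obtain m' where m: "m = Suc m'" and d: "qdepth \<psi> \<le> m'" by (cases m) auto
  with Ex.prems have W: "win (Suc m') G H P" by simp
  have sub: "\<And>v w. (\<lambda>x. ((a(z:=v)) x, (b(z:=w)) x)) ` free_vars \<psi> \<subseteq> insert (v,w) P"
  proof (intro image_subsetI)
    fix v w x assume "x \<in> free_vars \<psi>"
    then show "((a(z:=v)) x, (b(z:=w)) x) \<in> insert (v,w) P" using Ex.prems(3) by (cases "x = z") auto
  qed
  show ?case
  proof
    assume "sat G a (Ex z \<psi>)"
    then obtain v where v: "v \<in> verts G" "sat G (a(z:=v)) \<psi>" by (simp only: sat.simps) blast
    from W v(1) obtain w where w: "w \<in> verts H" "win m' G H (insert (v,w) P)" by auto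
    from Ex.IH[OF w(2) d sub] v have "sat H (b(z:=w)) \<psi>" by blast
    with w(1) show "sat H b (Ex z \<psi>)" by (simp only: sat.simps) blast
  next
    assume "sat H b (Ex z \<psi>)"
    then obtain w where w: "w \<in> verts H" "sat H (b(z:=w)) \<psi>" by (simp only: sat.simps) blast
    from W w(1) obtain v where v: "v \<in> verts G" "win m' G H (insert (v,w) P)" by auto
    from Ex.IH[OF v(2) d sub] w have "sat G (a(z:=v)) \<psi>" by blast
    with v(1) show "sat G a (Ex z \<psi>)" by (simp only: sat.simps) blast
  qed
next
  case (All z \<psi>)
  then obtain m' where m: "m = Suc m'" and d: "qdepth \<psi> \<le> m'" by (cases m) auto
  with All.prems have W: "win (Suc m') G H P" by simp
  have sub: "\<And>v w. (\<lambda>x. ((a(z:=v)) x, (b(z:=w)) x)) ` free_vars \<psi> \<subseteq> insert (v,w) P"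
  proof (intro image_subsetI)
    fix v w x assume "x \<in> free_vars \<psi>"
    then show "((a(z:=v)) x, (b(z:=w)) x) \<in> insert (v,w) P" using All.prems(3) by (cases "x = z") auto
  qed
  show ?case
  proof
    assume A: "sat G a (All z \<psi>)"
    show "sat H b (All z \<psi>)"
    proof (simp only: sat.simps, intro ballI)
      fix w assume w: "w \<in> verts H"
      from W w obtain v where v: "v \<in> verts G" "win m' G H (insert (v,w) P)" by auto
      from A v have "sat G (a(z:=v)) \<psi>" by (metis sat.simps(9))
      with All.IH[OF v(2) d sub] show "sat H (b(z:=w)) \<psi>" by blast
    qed
  next
    assume A: "sat H b (All z \<psi>)"
    show "sat G a (All z \<psi>)"
    proof (simp only: sat.simps, intro ballI)
      fix v assume v: "v \<in> verts G"
      from W v obtain w where w: "w \<in> verts H" "win m' G H (insert (v,w) P)" by auto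
      from A w have "sat H (b(z:=w)) \<psi>" by (metis sat.simps(9))
      with All.IH[OF w(2) d sub] show "sat G (a(z:=v)) \<psi>" by blast
    qed
  qed
qed

lemma free_vars_sub_vars: "free_vars \<phi> \<subseteq> vars \<phi>"
  by (induction \<phi>) auto

lemma finite_vars: "finite (vars \<phi>)"
  by (induction \<phi>) auto

lemma pebble_lemma:
  assumes down: "\<And>P Q. good P \<Longrightarrow> Q \<subseteq> P \<Longrightarrow> good Q"
    and iso: "\<And>P. good P \<Longrightarrow> piso G H P"
    and forth: "\<And>P v. good P \<Longrightarrow> finite P \<Longrightarrow> card P < k \<Longrightarrow> v \<in> verts G \<Longrightarrow> \<exists>w\<in>verts H. good (insert (v,w) P)"
    and bck: "\<And>P w. good P \<Longrightarrow> finite P \<Longrightarrow> card P < k \<Longrightarrow> w \<in> verts H \<Longrightarrow> \<exists>v\<in>verts G. good (insert (v,w) P)"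
  shows "vars \<phi> \<subseteq> W \<Longrightarrow> finite W \<Longrightarrow> card W \<le> k \<Longrightarrow> good ((\<lambda>x. (a x, b x)) ` free_vars \<phi>)
    \<Longrightarrow> sat G a \<phi> = sat H b \<phi>"
proof (induction \<phi> arbitrary: a b)
  case (Adj x y)
  then have "piso G H ((\<lambda>x. (a x, b x)) ` free_vars (Adj x y))" using iso by blast
  then show ?case by (auto simp: piso_def)
next
  case (Eq x y)
  then have "piso G H ((\<lambda>x. (a x, b x)) ` free_vars (Eq x y))" using iso by blast
  then show ?case by (auto simp: piso_def)
next
  case (Neg \<phi>) then show ?case by auto
next
  case (Conj \<phi>1 \<phi>2)
  have "good ((\<lambda>x. (a x, b x)) ` free_vars \<phi>1)" "good ((\<lambda>x. (a x, b x)) ` free_vars \<phi>2)"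
    using Conj.prems(4) by (auto elim!: down)
  with Conj show ?case by auto
next
  case (Disj \<phi>1 \<phi>2)
  have "good ((\<lambda>x. (a x, b x)) ` free_vars \<phi>1)" "good ((\<lambda>x. (a x, b x)) ` free_vars \<phi>2)"
    using Disj.prems(4) by (auto elim!: down)
  with Disj show ?case by auto
next
  case (Impl \<phi>1 \<phi>2)
  have "good ((\<lambda>x. (a x, b x)) ` free_vars \<phi>1)" "good ((\<lambda>x. (a x, b x)) ` free_vars \<phi>2)"
    using Impl.prems(4) by (auto elim!: down)
  with Impl show ?case by auto
next
  case (Iff \<phi>1 \<phi>2)
  have "good ((\<lambda>x. (a x, b x)) ` free_vars \<phi>1)" "good ((\<lambda>x. (a x, b x)) ` free_vars \<phi>2)"
    using Iff.prems(4) by (auto elim!: down)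
  with Iff show ?case by auto
next
  case (Ex z \<psi>)
  let ?P = "(\<lambda>x. (a x, b x)) ` free_vars (Ex z \<psi>)"
  have fvW: "free_vars (Ex z \<psi>) \<subseteq> W - {z}" using Ex.prems(1) free_vars_sub_vars[of \<psi>] by auto
  have zW: "z \<in> W" using Ex.prems(1) by auto
  have cW: "card (W - {z}) < k" using Ex.prems(2,3) zW
    by (metis card_Diff1_less le_trans not_le)
  have finP: "finite ?P" using fvW Ex.prems(2) by (meson finite_Diff finite_imageI finite_subset)
  have "card ?P \<le> card (free_vars (Ex z \<psi>))" by (rule card_image_le) (use fvW Ex.prems(2) finite_subset in blast)
  also have "\<dots> \<le> card (W - {z})" by (rule card_mono) (use Ex.prems(2) fvW in auto)
  finally have cP: "card ?P < k" using cW by simp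
  have vW: "vars \<psi> \<subseteq> W" using Ex.prems(1) by auto
  have sub: "\<And>v w. (\<lambda>x. ((a(z:=v)) x, (b(z:=w)) x)) ` free_vars \<psi> \<subseteq> insert (v,w) ?P"
    by auto
  show ?case
  proof
    assume "sat G a (Ex z \<psi>)"
    then obtain v where v: "v \<in> verts G" "sat G (a(z:=v)) \<psi>" by (simp only: sat.simps) blast
    from forth[OF Ex.prems(4) finP cP v(1)] obtain w where w: "w \<in> verts H" "good (insert (v,w) ?P)" by auto
    have "good ((\<lambda>x. ((a(z:=v)) x, (b(z:=w)) x)) ` free_vars \<psi>)" using down[OF w(2) sub] .
    from Ex.IH[OF vW Ex.prems(2,3) this] v have "sat H (b(z:=w)) \<psi>" by blast
    with w(1) show "sat H b (Ex z \<psi>)" by (simp only: sat.simps) blast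
  next
    assume "sat H b (Ex z \<psi>)"
    then obtain w where w: "w \<in> verts H" "sat H (b(z:=w)) \<psi>" by (simp only: sat.simps) blast
    from bck[OF Ex.prems(4) finP cP w(1)] obtain v where v: "v \<in> verts G" "good (insert (v,w) ?P)" by auto
    have "good ((\<lambda>x. ((a(z:=v)) x, (b(z:=w)) x)) ` free_vars \<psi>)" using down[OF v(2) sub] .
    from Ex.IH[OF vW Ex.prems(2,3) this] w have "sat G (a(z:=v)) \<psi>" by blast
    with v(1) show "sat G a (Ex z \<psi>)" by (simp only: sat.simps) blast
  qed
next
  case (All z \<psi>)
  let ?P = "(\<lambda>x. (a x, b x)) ` free_vars (All z \<psi>)"
  have fvW: "free_vars (All z \<psi>) \<subseteq> W - {z}" using All.prems(1) free_vars_sub_vars[of \<psi>] by auto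
  have zW: "z \<in> W" using All.prems(1) by auto
  have cW: "card (W - {z}) < k" using All.prems(2,3) zW
    by (metis card_Diff1_less le_trans not_le)
  have finP: "finite ?P" using fvW All.prems(2) by (meson finite_Diff finite_imageI finite_subset)
  have "card ?P \<le> card (free_vars (All z \<psi>))" by (rule card_image_le) (use fvW All.prems(2) finite_subset in blast)
  also have "\<dots> \<le> card (W - {z})" by (rule card_mono) (use All.prems(2) fvW in auto)
  finally have cP: "card ?P < k" using cW by simp
  have vW: "vars \<psi> \<subseteq> W" using All.prems(1) by auto
  have sub: "\<And>v w. (\<lambda>x. ((a(z:=v)) x, (b(z:=w)) x)) ` free_vars \<psi> \<subseteq> insert (v,w) ?P"
    by auto
  show ?case
  proof
    assume A: "sat G a (All z \<psi>)"
    show "sat H b (All z \<psi>)"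
    proof (simp only: sat.simps, intro ballI)
      fix w assume w: "w \<in> verts H"
      from bck[OF All.prems(4) finP cP w] obtain v where v: "v \<in> verts G" "good (insert (v,w) ?P)" by auto
      have "good ((\<lambda>x. ((a(z:=v)) x, (b(z:=w)) x)) ` free_vars \<psi>)" using down[OF v(2) sub] .
      moreover from A v have "sat G (a(z:=v)) \<psi>" by (metis sat.simps(9))
      ultimately show "sat H (b(z:=w)) \<psi>" using All.IH[OF vW All.prems(2,3)] by blast
    qed
  next
    assume A: "sat H b (All z \<psi>)"
    show "sat G a (All z \<psi>)"
    proof (simp only: sat.simps, intro ballI)
      fix v assume v: "v \<in> verts G"
      from forth[OF All.prems(4) finP cP v] obtain w where w: "w \<in> verts H" "good (insert (v,w) ?P)" by auto
      have "good ((\<lambda>x. ((a(z:=v)) x, (b(z:=w)) x)) ` free_vars \<psi>)" using down[OF w(2) sub] .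
      moreover from A w have "sat H (b(z:=w)) \<psi>" by (metis sat.simps(9))
      ultimately show "sat G (a(z:=v)) \<psi>" using All.IH[OF vW All.prems(2,3)] by blast
    qed
  qed
qed


lemma wf_sym: "wf_graph G \<Longrightarrow> adj G u w \<longleftrightarrow> adj G w u"
  unfolding wf_graph_def by blast
lemma wf_irr: "wf_graph G \<Longrightarrow> \<not> adj G u u"
  unfolding wf_graph_def by blast
lemma wf_in: "wf_graph G \<Longrightarrow> adj G u w \<Longrightarrow> u \<in> verts G \<and> w \<in> verts G"
  unfolding wf_graph_def by blast
lemma wf_fin: "wf_graph G \<Longrightarrow> finite (verts G)"
  unfolding wf_graph_def by blast

lemma piso_empty: "piso G H {}" by (simp add: piso_def)

lemma piso_insert:
  assumes "wf_graph G" "wf_graph H" "piso G H P" "v \<in> verts G" "w \<in> verts H"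
    "\<And>x x'. (x,x') \<in> P \<Longrightarrow> (v = x \<longleftrightarrow> w = x') \<and> (adj G v x \<longleftrightarrow> adj H w x')"
  shows "piso G H (insert (v,w) P)"
  using assms unfolding piso_def
  by (smt (verit, ccfv_threshold) insertE insert_subset mem_Sigma_iff old.prod.inject wf_irr wf_sym)

lemma piso_single: "wf_graph G \<Longrightarrow> wf_graph H \<Longrightarrow> v \<in> verts G \<Longrightarrow> w \<in> verts H \<Longrightarrow> piso G H {(v,w)}"
  using piso_insert[OF _ _ piso_empty] by blast

definition hasN :: "graph \<Rightarrow> nat \<Rightarrow> bool" where
  "hasN G u \<longleftrightarrow> (\<exists>z\<in>verts G. adj G u z)"
definition hasNN :: "graph \<Rightarrow> nat \<Rightarrow> bool" where
  "hasNN G u \<longleftrightarrow> (\<exists>z\<in>verts G. z \<noteq> u \<and> \<not> adj G u z)"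
definition common :: "graph \<Rightarrow> nat \<Rightarrow> nat \<Rightarrow> bool" where
  "common G u v \<longleftrightarrow> (\<exists>z\<in>verts G. adj G z u \<and> adj G z v)"

lemma one_ext:
  assumes "wf_graph G" "wf_graph H" "u \<in> verts G" "u' \<in> verts H"
    "hasN G u \<longleftrightarrow> hasN H u'" "hasNN G u \<longleftrightarrow> hasNN H u'" "v \<in> verts G"
  shows "\<exists>w\<in>verts H. (v = u \<longleftrightarrow> w = u') \<and> (adj G v u \<longleftrightarrow> adj H w u')"
proof (cases "v = u")
  case True then show ?thesis using assms by (metis wf_irr)
next
  case False
  show ?thesis
  proof (cases "adj G u v")
    case True
    then have "hasN H u'" using assms unfolding hasN_def by auto
    then obtain w where "w \<in> verts H" "adj H u' w" unfolding hasN_def by auto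
    then show ?thesis using True False assms by (metis wf_irr wf_sym)
  next
    case F: False
    then have "hasNN H u'" using assms False unfolding hasNN_def by auto
    then obtain w where "w \<in> verts H" "w \<noteq> u'" "\<not> adj H u' w" unfolding hasNN_def by auto
    then show ?thesis using F False assms by (metis wf_sym)
  qed
qed

lemma win1_types:
  assumes "wf_graph G" "wf_graph H" "u \<in> verts G" "u' \<in> verts H"
    "hasN G u \<longleftrightarrow> hasN H u'" "hasNN G u \<longleftrightarrow> hasNN H u'"
  shows "win 1 G H {(u,u')}"
proof -
  have p: "piso G H {(u,u')}" using piso_single assms by blast
  have f: "\<forall>v\<in>verts G. \<exists>w\<in>verts H. win 0 G H (insert (v,w) {(u,u')})"
  proof
    fix v assume v: "v \<in> verts G"
    from one_ext[OF assms v] obtain w where w: "w\<in>verts H" "(v = u \<longleftrightarrow> w = u') \<and> (adj G v u \<longleftrightarrow> adj H w u')" by blast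
    have "piso G H (insert (v,w) {(u,u')})" by (rule piso_insert) (use assms p v w in auto)
    then show "\<exists>w\<in>verts H. win 0 G H (insert (v,w) {(u,u')})" using w by auto
  qed
  have b: "\<forall>w\<in>verts H. \<exists>v\<in>verts G. win 0 G H (insert (v,w) {(u,u')})"
  proof
    fix w assume w: "w \<in> verts H"
    from one_ext[OF assms(2,1,4,3) _ _ w] assms(5,6) obtain v where v: "v\<in>verts G" "(w = u' \<longleftrightarrow> v = u) \<and> (adj H w u' \<longleftrightarrow> adj G v u)" by blast
    have "piso G H (insert (v,w) {(u,u')})" by (rule piso_insert) (use assms p v w in auto)
    then show "\<exists>v\<in>verts G. win 0 G H (insert (v,w) {(u,u')})" using v by auto
  qed
  show ?thesis using p f b by (simp add: One_nat_def)
qed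

lemma win2_types:
  assumes "wf_graph G" "wf_graph H"
    "\<And>v. v \<in> verts G \<Longrightarrow> \<exists>w\<in>verts H. (hasN G v \<longleftrightarrow> hasN H w) \<and> (hasNN G v \<longleftrightarrow> hasNN H w)"
    "\<And>w. w \<in> verts H \<Longrightarrow> \<exists>v\<in>verts G. (hasN G v \<longleftrightarrow> hasN H w) \<and> (hasNN G v \<longleftrightarrow> hasNN H w)"
  shows "win 2 G H {}"
proof -
  have "\<forall>v\<in>verts G. \<exists>w\<in>verts H. win 1 G H (insert (v,w) {})"
    using assms win1_types by (metis insert_absorb2 insert_commute)
  moreover have "\<forall>w\<in>verts H. \<exists>v\<in>verts G. win 1 G H (insert (v,w) {})"
    using assms win1_types by (metis insert_absorb2 insert_commute)
  ultimately show ?thesis unfolding numeral_2_eq_2 win.simps(2)[of "Suc 0"] One_nat_def using piso_empty by simp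
qed

definition rich :: "graph \<Rightarrow> bool" where
  "rich G \<longleftrightarrow> (\<forall>u\<in>verts G. \<forall>z\<in>verts G. adj G u z \<longrightarrow> \<not> common G u z)
    \<and> (\<forall>u\<in>verts G. (\<exists>z\<in>verts G. adj G u z) \<and> (\<exists>z\<in>verts G. z \<noteq> u \<and> \<not> adj G u z \<and> common G u z)
            \<and> (\<exists>z\<in>verts G. z \<noteq> u \<and> \<not> adj G u z \<and> \<not> common G u z))
    \<and> (\<forall>u\<in>verts G. \<forall>v\<in>verts G. u \<noteq> v \<longrightarrow> (\<exists>z\<in>verts G. z \<noteq> v \<and> adj G z u \<and> \<not> adj G z v)
            \<and> (\<exists>z\<in>verts G. z \<noteq> u \<and> z \<noteq> v \<and> \<not> adj G z u \<and> \<not> adj G z v))"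

lemma two_ext:
  assumes G: "wf_graph G" and H: "wf_graph H" and rG: "rich G" and rH: "rich H"
    and uv: "u \<in> verts G" "v \<in> verts G" "u' \<in> verts H" "v' \<in> verts H"
    and t: "(u = v \<longleftrightarrow> u' = v')" "(adj G u v \<longleftrightarrow> adj H u' v')" "(common G u v \<longleftrightarrow> common H u' v')"
    and z: "z \<in> verts G"
  shows "\<exists>z'\<in>verts H. (z = u \<longleftrightarrow> z' = u') \<and> (z = v \<longleftrightarrow> z' = v') \<and> (adj G z u \<longleftrightarrow> adj H z' u') \<and> (adj G z v \<longleftrightarrow> adj H z' v')"
proof -
  note irr = wf_irr[OF G] wf_irr[OF H]
  note sym = wf_sym[OF G] wf_sym[OF H]
  show ?thesis
  proof (cases "z = u")
    case True then show ?thesis using uv t irr sym by metis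
  next
    case zu: False
    show ?thesis
    proof (cases "z = v")
      case True then show ?thesis using uv t irr sym zu by metis
    next
      case zv: False
      show ?thesis
      proof (cases "u = v")
        case True
        then have uv': "u' = v'" using t by simp
        show ?thesis
        proof (cases "adj G z u")
          case True
          obtain z' where "z' \<in> verts H" "adj H u' z'" using rH uv unfolding rich_def by blast
          then show ?thesis using True \<open>u = v\<close> uv' irr sym zu zv by metis
        next
          case False
          obtain z' where "z' \<in> verts H" "z' \<noteq> u'" "\<not> adj H u' z'" using rH uv unfolding rich_def by blast
          then show ?thesis using False \<open>u = v\<close> uv' irr sym zu zv by metis
        qed
      next
        case unv: False
        then have unv': "u' \<noteq> v'" using t by simp
        have R3: "\<And>a b. a \<in> verts H \<Longrightarrow> b \<in> verts H \<Longrightarrow> a \<noteq> b \<Longrightarrow> (\<exists>z\<in>verts H. z \<noteq> b \<and> adj H z a \<and> \<not> adj H z b)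
            \<and> (\<exists>z\<in>verts H. z \<noteq> a \<and> z \<noteq> b \<and> \<not> adj H z a \<and> \<not> adj H z b)"
          using rH unfolding rich_def by blast
        consider "adj G z u" "adj G z v" | "adj G z u" "\<not> adj G z v" | "\<not> adj G z u" "adj G z v"
          | "\<not> adj G z u" "\<not> adj G z v" by blast
        then show ?thesis
        proof cases
          case 1
          then have "common G u v" using z unfolding common_def by blast
          then obtain z' where "z' \<in> verts H" "adj H z' u'" "adj H z' v'" using t unfolding common_def by blast
          then show ?thesis using 1 irr zu zv by metis
        next
          case 2
          obtain z' where "z' \<in> verts H" "z' \<noteq> v'" "adj H z' u'" "\<not> adj H z' v'" using R3[OF uv(3,4) unv'] by blast
          then show ?thesis using 2 irr zu zv by metis
        next
          case 3
          obtain z' where "z' \<in> verts H" "z' \<noteq> u'" "adj H z' v'" "\<not> adj H z' u'" using R3[OF uv(4,3)] unv' by metis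
          then show ?thesis using 3 irr zu zv by metis
        next
          case 4
          obtain z' where "z' \<in> verts H" "z' \<noteq> u'" "z' \<noteq> v'" "\<not> adj H z' u'" "\<not> adj H z' v'" using R3[OF uv(3,4) unv'] by blast
          then show ?thesis using 4 zu zv by metis
        qed
      qed
    qed
  qed
qed

lemma win1_rich:
  assumes G: "wf_graph G" and H: "wf_graph H" and rG: "rich G" and rH: "rich H"
    and uv: "u \<in> verts G" "v \<in> verts G" "u' \<in> verts H" "v' \<in> verts H"
    and t: "(u = v \<longleftrightarrow> u' = v')" "(adj G u v \<longleftrightarrow> adj H u' v')" "(common G u v \<longleftrightarrow> common H u' v')"
  shows "win 1 G H (insert (v,v') {(u,u')})"
proof -
  have p1: "piso G H {(u,u')}" using piso_single G H uv by blast
  have p: "piso G H (insert (v,v') {(u,u')})"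
    by (rule piso_insert) (use G H p1 uv t wf_sym[OF G] wf_sym[OF H] in auto)
  have f: "\<forall>z\<in>verts G. \<exists>z'\<in>verts H. win 0 G H (insert (z,z') (insert (v,v') {(u,u')}))"
  proof
    fix z assume z: "z \<in> verts G"
    from two_ext[OF G H rG rH uv t z] obtain z' where z': "z'\<in>verts H"
      "(z = u \<longleftrightarrow> z' = u') \<and> (z = v \<longleftrightarrow> z' = v') \<and> (adj G z u \<longleftrightarrow> adj H z' u') \<and> (adj G z v \<longleftrightarrow> adj H z' v')" by blast
    have "piso G H (insert (z,z') (insert (v,v') {(u,u')}))" by (rule piso_insert) (use G H p z z' in auto)
    then show "\<exists>z'\<in>verts H. win 0 G H (insert (z,z') (insert (v,v') {(u,u')}))" using z' by auto
  qed
  have t': "(u' = v' \<longleftrightarrow> u = v)" "(adj H u' v' \<longleftrightarrow> adj G u v)" "(common H u' v' \<longleftrightarrow> common G u v)" using t by auto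
  have b: "\<forall>z'\<in>verts H. \<exists>z\<in>verts G. win 0 G H (insert (z,z') (insert (v,v') {(u,u')}))"
  proof
    fix z' assume z': "z' \<in> verts H"
    from two_ext[OF H G rH rG uv(3,4,1,2) t' z'] obtain z where z: "z\<in>verts G"
      "(z' = u' \<longleftrightarrow> z = u) \<and> (z' = v' \<longleftrightarrow> z = v) \<and> (adj H z' u' \<longleftrightarrow> adj G z u) \<and> (adj H z' v' \<longleftrightarrow> adj G z v)" by blast
    have "piso G H (insert (z,z') (insert (v,v') {(u,u')}))" by (rule piso_insert) (use G H p z z' in auto)
    then show "\<exists>z\<in>verts G. win 0 G H (insert (z,z') (insert (v,v') {(u,u')}))" using z by auto
  qed
  show ?thesis using p f b by (simp add: One_nat_def)
qed

lemma type_ext: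
  assumes G: "wf_graph G" and H: "wf_graph H" and rH: "rich H" and rG: "rich G"
    and u: "u \<in> verts G" "u' \<in> verts H" and v: "v \<in> verts G"
  shows "\<exists>v'\<in>verts H. (u = v \<longleftrightarrow> u' = v') \<and> (adj G u v \<longleftrightarrow> adj H u' v') \<and> (common G u v \<longleftrightarrow> common H u' v')"
proof -
  have RH: "(\<forall>z\<in>verts H. adj H u' z \<longrightarrow> \<not> common H u' z) \<and> (\<exists>z\<in>verts H. adj H u' z) \<and> (\<exists>z\<in>verts H. z \<noteq> u' \<and> \<not> adj H u' z \<and> common H u' z)
            \<and> (\<exists>z\<in>verts H. z \<noteq> u' \<and> \<not> adj H u' z \<and> \<not> common H u' z)" using rH u unfolding rich_def by blast
  have cG: "adj G u v \<Longrightarrow> \<not> common G u v" using rG u v unfolding rich_def by blast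
  show ?thesis
  proof (cases "u = v")
    case True
    obtain z where z: "z \<in> verts G" "adj G u z" using rG u unfolding rich_def by blast
    have "common G u u" unfolding common_def using z wf_sym[OF G] by blast
    moreover have "common H u' u'" unfolding common_def using RH wf_sym[OF H] by blast
    ultimately show ?thesis using True u wf_irr[OF G] wf_irr[OF H] by (intro bexI[of _ u']) auto
  next
    case False
    consider "adj G u v" | "\<not> adj G u v" "common G u v" | "\<not> adj G u v" "\<not> common G u v" by blast
    then show ?thesis
    proof cases
      case 1
      from RH obtain z where "z\<in>verts H" "adj H u' z" by blast
      then show ?thesis using 1 cG RH wf_irr[OF H] False by (intro bexI[of _ z]) auto
    next
      case 2
      from RH obtain z where "z\<in>verts H" "z \<noteq> u'" "\<not> adj H u' z" "common H u' z" by blast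
      then show ?thesis using 2 False by (intro bexI[of _ z]) auto
    next
      case 3
      from RH obtain z where "z\<in>verts H" "z \<noteq> u'" "\<not> adj H u' z" "\<not> common H u' z" by blast
      then show ?thesis using 3 False by (intro bexI[of _ z]) auto
    qed
  qed
qed

lemma win3_rich:
  assumes G: "wf_graph G" and H: "wf_graph H" and rG: "rich G" and rH: "rich H"
    and ne: "verts G \<noteq> {}" "verts H \<noteq> {}"
  shows "win 3 G H {}"
proof -
  have w2: "win 2 G H {(u,u')}" if u: "u \<in> verts G" "u' \<in> verts H" for u u'
  proof -
    have p1: "piso G H {(u,u')}" using piso_single G H u by blast
    have "\<forall>v\<in>verts G. \<exists>v'\<in>verts H. win 1 G H (insert (v,v') {(u,u')})"
    proof
      fix v assume v: "v \<in> verts G"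
      from type_ext[OF G H rH rG u v] obtain v' where "v'\<in>verts H"
        "(u = v \<longleftrightarrow> u' = v') \<and> (adj G u v \<longleftrightarrow> adj H u' v') \<and> (common G u v \<longleftrightarrow> common H u' v')" by blast
      then show "\<exists>v'\<in>verts H. win 1 G H (insert (v,v') {(u,u')})" using win1_rich[OF G H rG rH u(1) v u(2)] by blast
    qed
    moreover have "\<forall>v'\<in>verts H. \<exists>v\<in>verts G. win 1 G H (insert (v,v') {(u,u')})"
    proof
      fix v' assume v': "v' \<in> verts H"
      from type_ext[OF H G rG rH u(2,1) v'] obtain v where "v\<in>verts G"
        "(u' = v' \<longleftrightarrow> u = v) \<and> (adj H u' v' \<longleftrightarrow> adj G u v) \<and> (common H u' v' \<longleftrightarrow> common G u v)" by blast
      then show "\<exists>v\<in>verts G. win 1 G H (insert (v,v') {(u,u')})" using win1_rich[OF G H rG rH u(1) _ u(2) v'] by metis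
    qed
    ultimately show ?thesis using p1 unfolding numeral_2_eq_2 win.simps(2)[of "Suc 0"] One_nat_def by simp
  qed
  have "\<forall>v\<in>verts G. \<exists>w\<in>verts H. win 2 G H (insert (v,w) {})" using w2 ne by blast
  moreover have "\<forall>w\<in>verts H. \<exists>v\<in>verts G. win 2 G H (insert (v,w) {})" using w2 ne by blast
  ultimately show ?thesis unfolding numeral_3_eq_3 win.simps(2)[of "Suc (Suc 0)"] numeral_2_eq_2 using piso_empty by blast
qed


lemma piso_mono: "piso G H P \<Longrightarrow> Q \<subseteq> P \<Longrightarrow> piso G H Q"
  unfolding piso_def by blast

lemma models_eq:
  assumes "\<And>a b. sat G a \<Phi> = sat H b \<Phi>"
  shows "models G \<Phi> = models H \<Phi>"
  using assms unfolding models_def by metis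

lemma width1_equiv:
  assumes G: "wf_graph G" and H: "wf_graph H" and ne: "verts G \<noteq> {}" "verts H \<noteq> {}"
    and w: "width \<Phi> \<le> 1" and s: "sentence \<Phi>"
  shows "sat G a \<Phi> = sat H b \<Phi>"
proof (rule pebble_lemma[where good = "\<lambda>P. piso G H P \<and> finite P \<and> card P \<le> 1" and k = 1 and W = "vars \<Phi>"])
  show "piso G H Q \<and> finite Q \<and> card Q \<le> 1" if "piso G H P \<and> finite P \<and> card P \<le> 1" "Q \<subseteq> P" for P Q
    using that piso_mono by (meson card_mono le_trans rev_finite_subset)
  show "\<exists>w\<in>verts H. piso G H (insert (v, w) P) \<and> finite (insert (v, w) P) \<and> card (insert (v, w) P) \<le> 1"
    if "piso G H P \<and> finite P \<and> card P \<le> 1" "finite P" "card P < 1" "v \<in> verts G" for P v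
  proof -
    from that have "P = {}" by simp
    obtain w where "w \<in> verts H" using ne by blast
    then show ?thesis using \<open>P = {}\<close> piso_single[OF G H \<open>v \<in> verts G\<close>] by auto
  qed
  show "\<exists>v\<in>verts G. piso G H (insert (v, w) P) \<and> finite (insert (v, w) P) \<and> card (insert (v, w) P) \<le> 1"
    if "piso G H P \<and> finite P \<and> card P \<le> 1" "finite P" "card P < 1" "w \<in> verts H" for P w
  proof -
    from that have "P = {}" by simp
    obtain v where "v \<in> verts G" using ne by blast
    then show ?thesis using \<open>P = {}\<close> piso_single[OF G H _ \<open>w \<in> verts H\<close>] by auto
  qed
  show "piso G H ((\<lambda>x. (a x, b x)) ` free_vars \<Phi>) \<and> finite ((\<lambda>x. (a x, b x)) ` free_vars \<Phi>) \<and> card ((\<lambda>x. (a x, b x)) ` free_vars \<Phi>) \<le> 1"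
    using s by (simp add: sentence_def piso_empty)
qed (use w finite_vars in \<open>auto simp: width_def\<close>)

lemma width2_equiv:
  assumes G: "wf_graph G" and H: "wf_graph H" and ne: "verts G \<noteq> {}" "verts H \<noteq> {}"
    and tG: "\<And>u. u \<in> verts G \<Longrightarrow> hasN G u \<and> hasNN G u"
    and tH: "\<And>u. u \<in> verts H \<Longrightarrow> hasN H u \<and> hasNN H u"
    and w: "width \<Phi> \<le> 2" and s: "sentence \<Phi>"
  shows "sat G a \<Phi> = sat H b \<Phi>"
proof (rule pebble_lemma[where good = "\<lambda>P. piso G H P \<and> finite P \<and> card P \<le> 2" and k = 2 and W = "vars \<Phi>"])
  show "piso G H Q \<and> finite Q \<and> card Q \<le> 2" if "piso G H P \<and> finite P \<and> card P \<le> 2" "Q \<subseteq> P" for P Q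
    using that piso_mono by (meson card_mono le_trans rev_finite_subset)
  show "\<exists>w\<in>verts H. piso G H (insert (v, w) P) \<and> finite (insert (v, w) P) \<and> card (insert (v, w) P) \<le> 2"
    if A: "piso G H P \<and> finite P \<and> card P \<le> 2" "finite P" "card P < 2" "v \<in> verts G" for P v
  proof -
    from A have "P = {} \<or> (\<exists>x. P = {x})"
      by (metis One_nat_def card_1_singletonE card_0_eq less_2_cases)
    then show ?thesis
    proof
      assume "P = {}"
      obtain w where "w \<in> verts H" using ne by blast
      then show ?thesis using \<open>P = {}\<close> piso_single[OF G H \<open>v \<in> verts G\<close>] by auto
    next
      assume "\<exists>x. P = {x}"
      then obtain u u' where P: "P = {(u,u')}" by auto
      then have u: "u \<in> verts G" "u' \<in> verts H" using A unfolding piso_def by auto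
      from one_ext[OF G H u _ _ A(4)] tG[OF u(1)] tH[OF u(2)] obtain w where
        w: "w \<in> verts H" "(v = u \<longleftrightarrow> w = u') \<and> (adj G v u \<longleftrightarrow> adj H w u')" by blast
      have "piso G H (insert (v,w) P)" by (rule piso_insert) (use G H A w P in auto)
      moreover have "card (insert (v,w) P) \<le> 2" using P by (simp add: card_insert_if)
      ultimately show ?thesis using w P by auto
    qed
  qed
  show "\<exists>v\<in>verts G. piso G H (insert (v, w) P) \<and> finite (insert (v, w) P) \<and> card (insert (v, w) P) \<le> 2"
    if A: "piso G H P \<and> finite P \<and> card P \<le> 2" "finite P" "card P < 2" "w \<in> verts H" for P w
  proof -
    from A have "P = {} \<or> (\<exists>x. P = {x})"
      by (metis One_nat_def card_1_singletonE card_0_eq less_2_cases)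
    then show ?thesis
    proof
      assume "P = {}"
      obtain v where "v \<in> verts G" using ne by blast
      then show ?thesis using \<open>P = {}\<close> piso_single[OF G H _ \<open>w \<in> verts H\<close>] by auto
    next
      assume "\<exists>x. P = {x}"
      then obtain u u' where P: "P = {(u,u')}" by auto
      then have u: "u \<in> verts G" "u' \<in> verts H" using A unfolding piso_def by auto
      from one_ext[OF H G u(2,1) _ _ A(4)] tG[OF u(1)] tH[OF u(2)] obtain v where
        v: "v \<in> verts G" "(w = u' \<longleftrightarrow> v = u) \<and> (adj H w u' \<longleftrightarrow> adj G v u)" by blast
      have "piso G H (insert (v,w) P)" by (rule piso_insert) (use G H A v P in auto)
      moreover have "card (insert (v,w) P) \<le> 2" using P by (simp add: card_insert_if)
      ultimately show ?thesis using v P by auto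
    qed
  qed
  show "piso G H ((\<lambda>x. (a x, b x)) ` free_vars \<Phi>) \<and> finite ((\<lambda>x. (a x, b x)) ` free_vars \<Phi>) \<and> card ((\<lambda>x. (a x, b x)) ` free_vars \<Phi>) \<le> 2"
    using s by (simp add: sentence_def piso_empty)
qed (use w finite_vars in \<open>auto simp: width_def\<close>)


lemma hub_connected:
  assumes G: "wf_graph G" and h: "h \<in> verts G" and hub: "\<And>u. u \<in> verts G \<Longrightarrow> u \<noteq> h \<Longrightarrow> adj G u h"
  shows "connected G"
proof -
  have toh: "(u,h) \<in> (edge_rel G)\<^sup>*" if "u \<in> verts G" for u
  proof (cases "u = h")
    case False
    then have "(u,h) \<in> edge_rel G" using hub that h unfolding edge_rel_def by blast
    then show ?thesis by (rule r_into_rtrancl)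
  qed simp
  have fromh: "(h,u) \<in> (edge_rel G)\<^sup>*" if "u \<in> verts G" for u
  proof (cases "u = h")
    case False
    then have "adj G h u" using hub that wf_sym[OF G] by blast
    then have "(h,u) \<in> edge_rel G" using that h unfolding edge_rel_def by blast
    then show ?thesis by (rule r_into_rtrancl)
  qed simp
  show ?thesis unfolding connected_def
  proof (intro conjI ballI)
    show "verts G \<noteq> {}" using h by blast
    fix u w assume "u \<in> verts G" "w \<in> verts G"
    show "(u, w) \<in> (edge_rel G)\<^sup>*" using rtrancl_trans[OF toh fromh] \<open>u \<in> verts G\<close> \<open>w \<in> verts G\<close> by blast
  qed
qed

definition starG :: "nat \<Rightarrow> graph" where
  "starG n = ({0..n}, \<lambda>u w. (u = 0 \<and> 1 \<le> w \<and> w \<le> n) \<or> (w = 0 \<and> 1 \<le> u \<and> u \<le> n))"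
definition starE :: "nat \<Rightarrow> graph" where
  "starE n = ({0..n}, \<lambda>u w. (u = 0 \<and> 1 \<le> w \<and> w \<le> n) \<or> (w = 0 \<and> 1 \<le> u \<and> u \<le> n) \<or> (u = 1 \<and> w = 2) \<or> (u = 2 \<and> w = 1))"

lemma starG_simps: "verts (starG n) = {0..n}" "adj (starG n) u w \<longleftrightarrow> (u = 0 \<and> 1 \<le> w \<and> w \<le> n) \<or> (w = 0 \<and> 1 \<le> u \<and> u \<le> n)"
  by (simp_all add: starG_def verts_def adj_def)
lemma starE_simps: "verts (starE n) = {0..n}" "adj (starE n) u w \<longleftrightarrow> (u = 0 \<and> 1 \<le> w \<and> w \<le> n) \<or> (w = 0 \<and> 1 \<le> u \<and> u \<le> n) \<or> (u = 1 \<and> w = 2) \<or> (u = 2 \<and> w = 1)"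
  by (simp_all add: starE_def verts_def adj_def)

lemma starG_wf: "wf_graph (starG n)" unfolding wf_graph_def starG_simps by auto
lemma starE_wf: "n \<ge> 2 \<Longrightarrow> wf_graph (starE n)" unfolding wf_graph_def starE_simps by auto
lemma starG_conn: "connected (starG n)"
  by (rule hub_connected[OF starG_wf, of 0]) (auto simp: starG_simps)
lemma starE_conn: "n \<ge> 2 \<Longrightarrow> connected (starE n)"
  by (rule hub_connected[OF starE_wf, of _ 0]) (auto simp: starE_simps)
lemma star_nverts: "nverts (starG n) = Suc n" "nverts (starE n) = Suc n"
  by (simp_all add: nverts_def starG_simps starE_simps)

lemma P4_simps: "verts P4 = {0,1,2,3}"
  "adj P4 u w \<longleftrightarrow> (u,w) \<in> {(0,1),(1,0),(1,2),(2,1),(2,3),(3,2)}"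
  by (simp_all add: P4_def verts_def adj_def)

lemma P4_obtain:
  assumes "contains_subgraph G P4"
  obtains a b c d where "adj G a b" "adj G b c" "adj G c d" "a \<noteq> b" "a \<noteq> c" "a \<noteq> d" "b \<noteq> c" "b \<noteq> d" "c \<noteq> d"
    "a \<in> verts G" "b \<in> verts G" "c \<in> verts G" "d \<in> verts G"
proof -
  from assms obtain f where f: "inj_on f (verts P4)" "f ` verts P4 \<subseteq> verts G"
    "\<forall>u\<in>verts P4. \<forall>w\<in>verts P4. adj P4 u w \<longrightarrow> adj G (f u) (f w)"
    unfolding contains_subgraph_def by blast
  have V: "(0::nat) \<in> verts P4" "(1::nat) \<in> verts P4" "(2::nat) \<in> verts P4" "(3::nat) \<in> verts P4" by (simp_all add: P4_simps)
  have A: "adj P4 0 1" "adj P4 1 2" "adj P4 2 3" by (simp_all add: P4_simps)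
  have e: "adj G (f 0) (f 1)" "adj G (f 1) (f 2)" "adj G (f 2) (f 3)"
    using f(3) V A by blast+
  have d: "f 0 \<noteq> f 1" "f 0 \<noteq> f 2" "f 0 \<noteq> f 3" "f 1 \<noteq> f 2" "f 1 \<noteq> f 3" "f 2 \<noteq> f 3"
    using f(1) V unfolding inj_on_def by (metis numeral_eq_iff semiring_norm num.distinct zero_neq_numeral one_neq_zero zero_neq_one numeral_eq_one_iff)+
  show ?thesis using that[OF e d] f(2) V by blast
qed

lemma P4_make:
  assumes "adj G a b" "adj G b c" "adj G c d" "a \<noteq> b" "a \<noteq> c" "a \<noteq> d" "b \<noteq> c" "b \<noteq> d" "c \<noteq> d"
    "a \<in> verts G" "b \<in> verts G" "c \<in> verts G" "d \<in> verts G" "wf_graph G"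
  shows "contains_subgraph G P4"
  unfolding contains_subgraph_def P4_simps
proof (intro exI[of _ "\<lambda>i::nat. if i = 0 then a else if i = 1 then b else if i = 2 then c else d"] conjI)
  show "inj_on (\<lambda>i::nat. if i = 0 then a else if i = 1 then b else if i = 2 then c else d) {0::nat, 1, 2, 3}"
    using assms unfolding inj_on_def by auto
  show "(\<lambda>i::nat. if i = 0 then a else if i = 1 then b else if i = 2 then c else d) ` {0, 1, 2, 3} \<subseteq> verts G"
    using assms by auto
  have s: "adj G b a" "adj G c b" "adj G d c" using assms wf_sym[OF assms(14)] by blast+
  show "\<forall>u::nat\<in>{0, 1, 2, 3}. \<forall>w::nat\<in>{0, 1, 2, 3}. (u, w) \<in> {(0, 1), (1, 0), (1, 2), (2, 1), (2, 3), (3, 2)} \<longrightarrow>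
       adj G (if u = 0 then a else if u = 1 then b else if u = 2 then c else d) (if w = 0 then a else if w = 1 then b else if w = 2 then c else d)"
    using assms s by simp
qed

lemma starG_noP4: "\<not> contains_subgraph (starG n) P4"
proof
  assume "contains_subgraph (starG n) P4"
  then obtain a b c d where "adj (starG n) a b" "adj (starG n) c d" "a \<noteq> c" "a \<noteq> d" "b \<noteq> c" "b \<noteq> d"
    by (rule P4_obtain) blast
  then show False unfolding starG_simps by auto
qed

lemma starE_P4: "n \<ge> 3 \<Longrightarrow> contains_subgraph (starE n) P4"
  by (rule P4_make[of _ 3 0 1 2]) (auto simp: starE_simps starE_wf)

lemma star_types: assumes "n \<ge> 3" "v \<in> {0..n}"
  shows "hasN (starG n) v \<longleftrightarrow> hasN (starE n) v" "hasNN (starG n) v \<longleftrightarrow> hasNN (starE n) v"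
proof -
  have "hasN (starG n) v" unfolding hasN_def starG_simps using assms
    by (cases "v = 0") (auto intro: bexI[of _ 1] bexI[of _ 0])
  moreover have "hasN (starE n) v" unfolding hasN_def starE_simps using assms
    by (cases "v = 0") (auto intro: bexI[of _ 1] bexI[of _ 0])
  ultimately show "hasN (starG n) v \<longleftrightarrow> hasN (starE n) v" by simp
  show "hasNN (starG n) v \<longleftrightarrow> hasNN (starE n) v"
  proof (cases "v = 0")
    case True then show ?thesis unfolding hasNN_def starG_simps starE_simps by auto
  next
    case False
    have "hasNN (starG n) v" unfolding hasNN_def starG_simps using assms False
      by (intro bexI[of _ "if v \<le> 2 then 3 else 1"]) auto
    moreover have "hasNN (starE n) v" unfolding hasNN_def starE_simps using assms False
      by (intro bexI[of _ "if v \<le> 2 then 3 else 1"]) auto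
    ultimately show ?thesis by simp
  qed
qed

lemma star_win2: "n \<ge> 3 \<Longrightarrow> win 2 (starG n) (starE n) {}"
  apply (rule win2_types[OF starG_wf starE_wf])
  using star_types by (auto simp: starG_simps starE_simps)

definition domv :: "graph \<Rightarrow> nat \<Rightarrow> bool" where
  "domv G x \<longleftrightarrow> (\<forall>z\<in>verts G. z = x \<or> adj G x z)"

definition PhiP4 :: fo where
  "PhiP4 = Neg (All 0 (All 1 (Impl (Adj 0 1) (Iff (All 1 (Disj (Eq 1 0) (Adj 0 1))) (Neg (All 0 (Disj (Eq 0 1) (Adj 1 0))))))))"

lemma PhiP4_sat: "sat G a PhiP4 \<longleftrightarrow> (\<exists>x\<in>verts G. \<exists>y\<in>verts G. adj G x y \<and> (domv G x \<longleftrightarrow> domv G y))"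
  unfolding PhiP4_def domv_def by auto

lemma PhiP4_vars: "vars PhiP4 = {0,1}" by (rule set_eqI) (auto simp: PhiP4_def)
lemma PhiP4_props: "sentence PhiP4" "qdepth PhiP4 = 3" "width PhiP4 = 2"
  unfolding sentence_def width_def PhiP4_vars by (auto simp: PhiP4_def)

lemma exit_lemma:
  assumes "(z,x) \<in> R\<^sup>*" "z \<notin> A" "x \<in> A"
  shows "\<exists>t s. (t,s) \<in> R \<and> t \<notin> A \<and> s \<in> A"
  using assms by (induction rule: rtrancl_induct) auto

lemma two_elems: "finite A \<Longrightarrow> card A \<ge> 2 \<Longrightarrow> \<exists>e f. e \<in> A \<and> f \<in> A \<and> e \<noteq> f"
  by (metis card_2_iff' card_le_Suc_iff numeral_2_eq_2 insertCI)

lemma P4_char: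
  assumes G: "wf_graph G" and C: "connected G" and n: "card (verts G) \<ge> 4"
  shows "contains_subgraph G P4 \<longleftrightarrow> (\<exists>x\<in>verts G. \<exists>y\<in>verts G. adj G x y \<and> (domv G x \<longleftrightarrow> domv G y))"
proof
  assume "contains_subgraph G P4"
  then obtain a b c d where p: "adj G a b" "adj G b c" "adj G c d" "a \<noteq> b" "a \<noteq> c" "a \<noteq> d" "b \<noteq> c" "b \<noteq> d" "c \<noteq> d"
    "a \<in> verts G" "b \<in> verts G" "c \<in> verts G" "d \<in> verts G" by (rule P4_obtain)
  show "\<exists>x\<in>verts G. \<exists>y\<in>verts G. adj G x y \<and> (domv G x \<longleftrightarrow> domv G y)"
  proof (rule ccontr)
    assume N: "\<not> ?thesis"
    then have X: "\<And>x y. x \<in> verts G \<Longrightarrow> y \<in> verts G \<Longrightarrow> adj G x y \<Longrightarrow> (domv G x \<longleftrightarrow> \<not> domv G y)" by blast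
    have "domv G b \<or> domv G c" using X[OF p(11,12,2)] by blast
    then show False
    proof
      assume db: "domv G b"
      then have "\<not> domv G c" using X[OF p(11,12,2)] by blast
      then have "domv G d" using X[OF p(12,13,3)] by blast
      have "adj G b d" using db p unfolding domv_def by auto
      then show False using X[OF p(11,13)] db \<open>domv G d\<close> by blast
    next
      assume dc: "domv G c"
      then have "\<not> domv G b" using X[OF p(11,12,2)] by blast
      then have "domv G a" using X[OF p(10,11,1)] by blast
      have "adj G c a" using dc p unfolding domv_def by auto
      then show False using X[OF p(12,10)] dc \<open>domv G a\<close> by blast
    qed
  qed
next
  assume "\<exists>x\<in>verts G. \<exists>y\<in>verts G. adj G x y \<and> (domv G x \<longleftrightarrow> domv G y)"
  then obtain x y where xy: "x \<in> verts G" "y \<in> verts G" "adj G x y" "domv G x \<longleftrightarrow> domv G y" by blast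
  have xny: "x \<noteq> y" using xy wf_irr[OF G] by blast
  have fin: "finite (verts G)" using wf_fin[OF G] .
  show "contains_subgraph G P4"
  proof (cases "domv G x")
    case True
    then have dy: "domv G y" using xy by simp
    have "card (verts G - {x,y}) \<ge> 2" using n xy fin xny by (simp add: card_Diff_subset)
    then obtain e f where ef: "e \<in> verts G - {x,y}" "f \<in> verts G - {x,y}" "e \<noteq> f"
      using two_elems fin by (meson finite_Diff)
    have "adj G e x" "adj G x f" "adj G f y" using True dy ef wf_sym[OF G] unfolding domv_def by blast+
    then show ?thesis using P4_make[of G e x f y] ef xy xny G by blast
  next
    case False
    then have dy: "\<not> domv G y" using xy by simp
    obtain u where u: "u \<in> verts G" "u \<noteq> x" "\<not> adj G x u" using False unfolding domv_def by blast
    obtain w where w: "w \<in> verts G" "w \<noteq> y" "\<not> adj G y w" using dy unfolding domv_def by blast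
    define A where "A = {x,y} \<union> {z. adj G x z \<or> adj G y z}"
    show ?thesis
    proof (cases "verts G \<subseteq> A")
      case True
      have uy: "u \<noteq> y" using u xy by blast
      have "adj G y u" using True u uy unfolding A_def using wf_sym[OF G] by blast
      have wx: "w \<noteq> x" using w xy wf_sym[OF G] by blast
      have "adj G x w" using True w wx unfolding A_def using wf_sym[OF G] by blast
      have "u \<noteq> w" using u \<open>adj G x w\<close> by blast
      then show ?thesis using P4_make[of G u y x w] \<open>adj G y u\<close> \<open>adj G x w\<close> xy u w uy wx xny G wf_sym[OF G] by metis
    next
      case False
      then obtain z where z: "z \<in> verts G" "z \<notin> A" by blast
      have "(z,x) \<in> (edge_rel G)\<^sup>*" using C z xy unfolding connected_def by blast
      moreover have "x \<in> A" unfolding A_def by blast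
      ultimately obtain t s where ts: "(t,s) \<in> edge_rel G" "t \<notin> A" "s \<in> A" using exit_lemma z by metis
      then have tsv: "t \<in> verts G" "s \<in> verts G" "adj G t s" unfolding edge_rel_def by auto
      have tx: "t \<noteq> x" "t \<noteq> y" "\<not> adj G x t" "\<not> adj G y t" using ts unfolding A_def by auto
      have sx: "s \<noteq> x" "s \<noteq> y" using tsv tx wf_sym[OF G] by auto
      have tns: "t \<noteq> s" using tsv wf_irr[OF G] by blast
      have "adj G x s \<or> adj G y s" using ts sx unfolding A_def by auto
      then show ?thesis
      proof
        assume "adj G x s"
        then show ?thesis using P4_make[of G t s x y] tsv tx sx tns xy xny G wf_sym[OF G] by metis
      next
        assume "adj G y s"
        then show ?thesis using P4_make[of G t s y x] tsv tx sx tns xy xny G wf_sym[OF G] by metis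
      qed
    qed
  qed
qed


lemma kappa_ge: "k_connected k G \<Longrightarrow> k \<le> kappa G"
  unfolding kappa_def by (rule Greatest_le_nat[where b = "card (verts G)"]) (auto simp: k_connected_def)

lemma del_simps: "verts (del_verts G S) = verts G - S"
  "adj (del_verts G S) u w \<longleftrightarrow> adj G u w \<and> u \<notin> S \<and> w \<notin> S"
  by (simp_all add: del_verts_def verts_def adj_def)

lemma del_edge: "u \<in> verts G \<Longrightarrow> w \<in> verts G \<Longrightarrow> u \<notin> S \<Longrightarrow> w \<notin> S \<Longrightarrow> adj G u w
  \<Longrightarrow> (u,w) \<in> (edge_rel (del_verts G S))\<^sup>*"
  by (rule r_into_rtrancl) (simp add: edge_rel_def del_simps)

lemma del_rt_sym:
  assumes G: "wf_graph G" and r: "(x,y) \<in> (edge_rel (del_verts G S))\<^sup>*"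
  shows "(y,x) \<in> (edge_rel (del_verts G S))\<^sup>*"
proof -
  have e: "(edge_rel (del_verts G S))\<inverse> = edge_rel (del_verts G S)"
    using wf_sym[OF G] unfolding edge_rel_def del_simps by auto
  from rtrancl_converseI[OF r] show ?thesis unfolding e .
qed

lemma hub_conn_del:
  assumes G: "wf_graph G" and c: "c \<in> verts G - S"
    and reach: "\<And>x. x \<in> verts G - S \<Longrightarrow> (x,c) \<in> (edge_rel (del_verts G S))\<^sup>*"
  shows "connected (del_verts G S)"
  unfolding connected_def del_simps(1)
proof (intro conjI ballI)
  show "verts G - S \<noteq> {}" using c by blast
  fix u w assume "u \<in> verts G - S" "w \<in> verts G - S"
  show "(u, w) \<in> (edge_rel (del_verts G S))\<^sup>*"
    using rtrancl_trans[OF reach[OF \<open>u \<in> verts G - S\<close>] del_rt_sym[OF G reach[OF \<open>w \<in> verts G - S\<close>]]] .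
qed

lemma k_connI:
  assumes G: "wf_graph G" and k: "k \<ge> 1" and card: "card (verts G) > k"
    and del: "\<And>S. S \<subseteq> verts G \<Longrightarrow> card S < k \<Longrightarrow> connected (del_verts G S)"
  shows "k_connected k G"
proof -
  have "del_verts G {} = G" by (simp add: del_verts_def verts_def adj_def)
  then have "connected G" using del[of "{}"] k by simp
  then show ?thesis unfolding k_connected_def
  proof (intro conjI allI impI)
    fix S assume "S \<subseteq> verts G \<and> card S < k"
    then show "connected (del_verts G S)" using del by blast
  qed (use card in auto)
qed

lemma avoid: "finite X \<Longrightarrow> card X < n \<Longrightarrow> \<exists>j<n. j \<notin> (X::nat set)"
proof (rule ccontr)
  assume "finite X" "card X < n" "\<not> (\<exists>j<n. j \<notin> X)"
  then have "{..<n} \<subseteq> X" by auto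
  then have "card {..<n} \<le> card X" by (rule card_mono[OF \<open>finite X\<close>])
  then have "n \<le> card X" by simp
  then show False using \<open>card X < n\<close> by simp
qed

definition bip :: "graph \<Rightarrow> nat set \<Rightarrow> bool" where
  "bip G X \<longleftrightarrow> (\<forall>u w. adj G u w \<longrightarrow> (u \<in> X \<longleftrightarrow> w \<notin> X))"

lemma bip_no_common: "bip G X \<Longrightarrow> (u \<in> X \<longleftrightarrow> v \<notin> X) \<Longrightarrow> \<not> common G u v"
  unfolding bip_def common_def by blast

lemma rich_bip:
  assumes G: "wf_graph G" and B: "bip G X"
    and i: "\<And>u v. u \<in> verts G \<Longrightarrow> \<exists>z\<in>verts G. adj G u z \<and> z \<noteq> v"
    and ii: "\<And>u. u \<in> verts G \<Longrightarrow> \<exists>z\<in>verts G. z \<noteq> u \<and> (z \<in> X \<longleftrightarrow> u \<in> X) \<and> common G u z"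
    and iii: "\<And>u. u \<in> verts G \<Longrightarrow> \<exists>z\<in>verts G. (z \<in> X \<longleftrightarrow> u \<notin> X) \<and> \<not> adj G u z"
    and iv: "\<And>u v. u \<in> verts G \<Longrightarrow> v \<in> verts G \<Longrightarrow> u \<noteq> v \<Longrightarrow> (u \<in> X \<longleftrightarrow> v \<in> X) \<Longrightarrow> \<exists>z\<in>verts G. adj G z u \<and> \<not> adj G z v"
    and five: "\<And>u v. u \<in> verts G \<Longrightarrow> v \<in> verts G \<Longrightarrow> u \<noteq> v \<Longrightarrow> (u \<in> X \<longleftrightarrow> v \<in> X) \<Longrightarrow> \<exists>z\<in>verts G. z \<noteq> u \<and> z \<noteq> v \<and> (z \<in> X \<longleftrightarrow> u \<in> X)"
    and vi: "\<And>u v. u \<in> verts G \<Longrightarrow> v \<in> verts G \<Longrightarrow> (u \<in> X \<longleftrightarrow> v \<notin> X) \<Longrightarrow> \<exists>z\<in>verts G. z \<noteq> u \<and> (z \<in> X \<longleftrightarrow> u \<in> X) \<and> \<not> adj G z v"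
  shows "rich G"
proof -
  have Bs: "\<And>u w. adj G u w \<Longrightarrow> (u \<in> X \<longleftrightarrow> w \<notin> X)" using B unfolding bip_def by blast
  have sameN: "\<And>u w. (u \<in> X \<longleftrightarrow> w \<in> X) \<Longrightarrow> \<not> adj G u w" using Bs by blast
  have R1: "\<forall>u\<in>verts G. \<forall>z\<in>verts G. adj G u z \<longrightarrow> \<not> common G u z"
    using bip_no_common[OF B] Bs by metis
  have R2: "\<forall>u\<in>verts G. (\<exists>z\<in>verts G. adj G u z) \<and> (\<exists>z\<in>verts G. z \<noteq> u \<and> \<not> adj G u z \<and> common G u z)
            \<and> (\<exists>z\<in>verts G. z \<noteq> u \<and> \<not> adj G u z \<and> \<not> common G u z)"
  proof
    fix u assume u: "u \<in> verts G"
    have a: "\<exists>z\<in>verts G. adj G u z" using i[OF u] by blast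
    obtain z where z: "z\<in>verts G" "z \<noteq> u" "(z \<in> X \<longleftrightarrow> u \<in> X)" "common G u z" using ii[OF u] by blast
    have b: "\<exists>z\<in>verts G. z \<noteq> u \<and> \<not> adj G u z \<and> common G u z" using z sameN by metis
    obtain y where y: "y\<in>verts G" "(y \<in> X \<longleftrightarrow> u \<notin> X)" "\<not> adj G u y" using iii[OF u] by blast
    have c: "\<exists>z\<in>verts G. z \<noteq> u \<and> \<not> adj G u z \<and> \<not> common G u z"
      using y bip_no_common[OF B, of u y] by metis
    show "(\<exists>z\<in>verts G. adj G u z) \<and> (\<exists>z\<in>verts G. z \<noteq> u \<and> \<not> adj G u z \<and> common G u z)
            \<and> (\<exists>z\<in>verts G. z \<noteq> u \<and> \<not> adj G u z \<and> \<not> common G u z)" using a b c by blast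
  qed
  have R3: "\<forall>u\<in>verts G. \<forall>v\<in>verts G. u \<noteq> v \<longrightarrow> (\<exists>z\<in>verts G. z \<noteq> v \<and> adj G z u \<and> \<not> adj G z v)
            \<and> (\<exists>z\<in>verts G. z \<noteq> u \<and> z \<noteq> v \<and> \<not> adj G z u \<and> \<not> adj G z v)"
  proof (intro ballI impI)
    fix u v assume u: "u \<in> verts G" and v: "v \<in> verts G" and uv: "u \<noteq> v"
    show "(\<exists>z\<in>verts G. z \<noteq> v \<and> adj G z u \<and> \<not> adj G z v)
            \<and> (\<exists>z\<in>verts G. z \<noteq> u \<and> z \<noteq> v \<and> \<not> adj G z u \<and> \<not> adj G z v)"
    proof (cases "u \<in> X \<longleftrightarrow> v \<in> X")
      case True
      obtain z where z: "z\<in>verts G" "adj G z u" "\<not> adj G z v" using iv[OF u v uv True] by blast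
      have "z \<noteq> v" using z(2) Bs True by blast
      moreover obtain y where y: "y\<in>verts G" "y \<noteq> u" "y \<noteq> v" "(y \<in> X \<longleftrightarrow> u \<in> X)" using five[OF u v uv True] by blast
      moreover have "\<not> adj G y u" "\<not> adj G y v" using y(4) True sameN by blast+
      ultimately show ?thesis using z by blast
    next
      case False
      then have opp: "u \<in> X \<longleftrightarrow> v \<notin> X" by blast
      obtain z where z: "z\<in>verts G" "adj G u z" "z \<noteq> v" using i[OF u] by blast
      have "adj G z u" using z wf_sym[OF G] by blast
      moreover have "\<not> adj G z v" using Bs[OF z(2)] opp sameN by blast
      moreover obtain y where y: "y\<in>verts G" "y \<noteq> u" "(y \<in> X \<longleftrightarrow> u \<in> X)" "\<not> adj G y v" using vi[OF u v opp] by blast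
      moreover have "y \<noteq> v" using y(3) opp by blast
      moreover have "\<not> adj G y u" using y(3) sameN by blast
      ultimately show ?thesis using z by blast
    qed
  qed
  show ?thesis unfolding rich_def using R1 R2 R3 by blast
qed


lemma C4_simps: "verts C4 = {0,1,2,3}"
  "adj C4 u w \<longleftrightarrow> (u,w) \<in> {(0,1),(1,0),(1,2),(2,1),(2,3),(3,2),(3,0),(0,3)}"
  by (simp_all add: C4_def verts_def adj_def)

lemma C4_obtain:
  assumes "contains_subgraph G C4"
  obtains a b c d where "adj G a b" "adj G b c" "adj G c d" "adj G d a" "a \<noteq> c" "b \<noteq> d"
    "a \<in> verts G" "b \<in> verts G" "c \<in> verts G" "d \<in> verts G"
proof -
  from assms obtain f where f: "inj_on f (verts C4)" "f ` verts C4 \<subseteq> verts G"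
    "\<forall>u\<in>verts C4. \<forall>w\<in>verts C4. adj C4 u w \<longrightarrow> adj G (f u) (f w)"
    unfolding contains_subgraph_def by blast
  have V: "(0::nat) \<in> verts C4" "(1::nat) \<in> verts C4" "(2::nat) \<in> verts C4" "(3::nat) \<in> verts C4" by (simp_all add: C4_simps)
  have A: "adj C4 0 1" "adj C4 1 2" "adj C4 2 3" "adj C4 3 0" by (simp_all add: C4_simps)
  have e: "adj G (f 0) (f 1)" "adj G (f 1) (f 2)" "adj G (f 2) (f 3)" "adj G (f 3) (f 0)"
    using f(3) V A by blast+
  have d: "f 0 \<noteq> f 2" "f 1 \<noteq> f 3"
    using f(1) V unfolding inj_on_def by (metis numeral_eq_iff semiring_norm num.distinct zero_neq_numeral one_neq_zero zero_neq_one numeral_eq_one_iff)+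
  show ?thesis using that[OF e d] f(2) V by blast
qed

lemma C4_make:
  assumes "adj G a b" "adj G b c" "adj G c d" "adj G d a" "a \<noteq> c" "b \<noteq> d"
    "a \<in> verts G" "b \<in> verts G" "c \<in> verts G" "d \<in> verts G" "wf_graph G"
  shows "contains_subgraph G C4"
  unfolding contains_subgraph_def C4_simps
proof (intro exI[of _ "\<lambda>i::nat. if i = 0 then a else if i = 1 then b else if i = 2 then c else d"] conjI)
  have n: "a \<noteq> b" "b \<noteq> c" "c \<noteq> d" "d \<noteq> a" using assms wf_irr[OF assms(11)] by metis+
  show "inj_on (\<lambda>i::nat. if i = 0 then a else if i = 1 then b else if i = 2 then c else d) {0::nat, 1, 2, 3}"
    using assms n unfolding inj_on_def by auto
  show "(\<lambda>i::nat. if i = 0 then a else if i = 1 then b else if i = 2 then c else d) ` {0, 1, 2, 3} \<subseteq> verts G"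
    using assms by auto
  have s: "adj G b a" "adj G c b" "adj G d c" "adj G a d" using assms wf_sym[OF assms(11)] by blast+
  show "\<forall>u::nat\<in>{0, 1, 2, 3}. \<forall>w::nat\<in>{0, 1, 2, 3}. (u, w) \<in> {(0,1),(1,0),(1,2),(2,1),(2,3),(3,2),(3,0),(0,3)} \<longrightarrow>
       adj G (if u = 0 then a else if u = 1 then b else if u = 2 then c else d) (if w = 0 then a else if w = 1 then b else if w = 2 then c else d)"
    using assms s by simp
qed

definition PhiC4 :: fo where
  "PhiC4 = Ex 0 (Ex 1 (Ex 2 (Ex 3 (Conj (Adj 0 1) (Conj (Adj 1 2) (Conj (Adj 2 3) (Conj (Adj 3 0) (Conj (Neg (Eq 0 2)) (Neg (Eq 1 3))))))))))"

lemma PhiC4_sat: "sat G a PhiC4 \<longleftrightarrow> (\<exists>x0\<in>verts G. \<exists>x1\<in>verts G. \<exists>x2\<in>verts G. \<exists>x3\<in>verts G.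
    adj G x0 x1 \<and> adj G x1 x2 \<and> adj G x2 x3 \<and> adj G x3 x0 \<and> x0 \<noteq> x2 \<and> x1 \<noteq> x3)"
  unfolding PhiC4_def by simp

lemma PhiC4_models: "wf_graph G \<Longrightarrow> models G PhiC4 \<longleftrightarrow> contains_subgraph G C4"
  unfolding models_def PhiC4_sat
proof
  assume "wf_graph G" "\<forall>a::nat\<Rightarrow>nat. \<exists>x0\<in>verts G. \<exists>x1\<in>verts G. \<exists>x2\<in>verts G. \<exists>x3\<in>verts G.
    adj G x0 x1 \<and> adj G x1 x2 \<and> adj G x2 x3 \<and> adj G x3 x0 \<and> x0 \<noteq> x2 \<and> x1 \<noteq> x3"
  then obtain x0 x1 x2 x3 where "x0\<in>verts G" "x1\<in>verts G" "x2\<in>verts G" "x3\<in>verts G"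
    "adj G x0 x1" "adj G x1 x2" "adj G x2 x3" "adj G x3 x0" "x0 \<noteq> x2" "x1 \<noteq> x3" by blast
  then show "contains_subgraph G C4" using C4_make \<open>wf_graph G\<close> by blast
next
  assume "contains_subgraph G C4"
  then obtain a b c d where "adj G a b" "adj G b c" "adj G c d" "adj G d a" "a \<noteq> c" "b \<noteq> d"
    "a \<in> verts G" "b \<in> verts G" "c \<in> verts G" "d \<in> verts G" by (rule C4_obtain)
  then show "\<forall>a::nat\<Rightarrow>nat. \<exists>x0\<in>verts G. \<exists>x1\<in>verts G. \<exists>x2\<in>verts G. \<exists>x3\<in>verts G.
    adj G x0 x1 \<and> adj G x1 x2 \<and> adj G x2 x3 \<and> adj G x3 x0 \<and> x0 \<noteq> x2 \<and> x1 \<noteq> x3" by blast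
qed

lemma PhiC4_props: "sentence PhiC4" "qdepth PhiC4 = 4"
  unfolding sentence_def by (auto simp: PhiC4_def)

section \<open>The graph H_n: K_{n,n} minus two perfect matchings\<close>

definition sucm :: "nat \<Rightarrow> nat \<Rightarrow> nat" where "sucm n i = (if Suc i = n then 0 else Suc i)"
definition predm :: "nat \<Rightarrow> nat \<Rightarrow> nat" where "predm n j = (if j = 0 then n - 1 else j - 1)"
definition okH :: "nat \<Rightarrow> nat \<Rightarrow> nat \<Rightarrow> bool" where "okH n i j \<longleftrightarrow> j \<noteq> i \<and> j \<noteq> sucm n i"

definition Hg :: "nat \<Rightarrow> graph" where
  "Hg n = ({0..<2*n}, \<lambda>u w. (u < n \<and> n \<le> w \<and> w < 2*n \<and> okH n u (w - n)) \<or> (w < n \<and> n \<le> u \<and> u < 2*n \<and> okH n w (u - n)))"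

lemma Hg_verts: "verts (Hg n) = {0..<2*n}" by (simp add: Hg_def verts_def)
lemma Hg_adj: "adj (Hg n) u w \<longleftrightarrow> (u < n \<and> n \<le> w \<and> w < 2*n \<and> okH n u (w - n)) \<or> (w < n \<and> n \<le> u \<and> u < 2*n \<and> okH n w (u - n))"
  by (simp add: Hg_def adj_def)

lemma sucm_lt: "i < n \<Longrightarrow> sucm n i < n" unfolding sucm_def by auto
lemma predm_lt: "j < n \<Longrightarrow> predm n j < n" unfolding predm_def by auto
lemma sucm_neq: "n \<ge> 2 \<Longrightarrow> i < n \<Longrightarrow> sucm n i \<noteq> i" unfolding sucm_def by auto
lemma predm_neq: "n \<ge> 2 \<Longrightarrow> j < n \<Longrightarrow> predm n j \<noteq> j" unfolding predm_def by auto
lemma sucm2: "n \<ge> 3 \<Longrightarrow> i < n \<Longrightarrow> sucm n (sucm n i) \<noteq> i" unfolding sucm_def by auto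
lemma predm2: "n \<ge> 3 \<Longrightarrow> j < n \<Longrightarrow> predm n (predm n j) \<noteq> j" unfolding predm_def by auto
lemma sucm_predm: "i < n \<Longrightarrow> j < n \<Longrightarrow> j = sucm n i \<longleftrightarrow> i = predm n j"
  unfolding sucm_def predm_def by auto
lemma okH_alt: "i < n \<Longrightarrow> j < n \<Longrightarrow> okH n i j \<longleftrightarrow> i \<noteq> j \<and> i \<noteq> predm n j"
  unfolding okH_def using sucm_predm by blast

lemma Hg_wf: "wf_graph (Hg n)"
  unfolding wf_graph_def Hg_verts Hg_adj okH_def by auto

lemma adjAB: "i < n \<Longrightarrow> j < n \<Longrightarrow> adj (Hg n) i (n + j) \<longleftrightarrow> okH n i j" by (simp add: Hg_adj)
lemma adjBA: "i < n \<Longrightarrow> j < n \<Longrightarrow> adj (Hg n) (n + j) i \<longleftrightarrow> okH n i j" by (simp add: Hg_adj)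

lemma Hg_bip: "bip (Hg n) {..<n}" unfolding bip_def Hg_adj by auto

lemma Hcases:
  assumes "u \<in> verts (Hg n)" "u < n \<Longrightarrow> P" "\<And>j. j < n \<Longrightarrow> u = n + j \<Longrightarrow> P"
  shows P
proof (cases "u < n")
  case True then show ?thesis using assms by blast
next
  case False
  then have "u - n < n" "u = n + (u - n)" using assms(1) unfolding Hg_verts by auto
  then show ?thesis using assms(3) by blast
qed

lemma avoid_fin: "finite X \<Longrightarrow> card X < n \<Longrightarrow> (\<And>j. j < n \<Longrightarrow> j \<notin> X \<Longrightarrow> P) \<Longrightarrow> P"
  using avoid by blast

lemma cins: "finite A \<Longrightarrow> card (insert x A) \<le> Suc (card A)"
  by (simp add: card_insert_if)
lemma card2: "card {a,b::nat} \<le> 2"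
  using cins[of "{b}" a] by simp
lemma card3: "card {a,b,c::nat} \<le> 3"
  using cins[of "{b,c}" a] card2[of b c] by simp
lemma card4: "card {a,b,c,d::nat} \<le> 4"
  using cins[of "{b,c,d}" a] card3[of b c d] by simp

lemma Hg_rich: assumes n: "n \<ge> 7" shows "rich (Hg n)"
proof (rule rich_bip[OF Hg_wf Hg_bip])
  have n2: "n \<ge> 2" "n \<ge> 3" using n by auto
  show "\<exists>z\<in>verts (Hg n). adj (Hg n) u z \<and> z \<noteq> v" if u: "u \<in> verts (Hg n)" for u v
  proof (rule Hcases[OF u])
    assume ui: "u < n"
    have c: "card {u, sucm n u, v - n} < n" using card3[of u "sucm n u" "v - n"] n by linarith
    have "\<exists>j<n. j \<notin> {u, sucm n u, v - n}" by (rule avoid[OF _ c]) simp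
    then obtain j where j: "j < n" "j \<notin> {u, sucm n u, v - n}" by blast
    show ?thesis using j ui by (intro bexI[of _ "n + j"]) (auto simp: Hg_verts adjAB okH_def)
  next
    fix j assume j: "j < n" "u = n + j"
    have c: "card {j, predm n j, v} < n" using card3[of j "predm n j" v] n by linarith
    have "\<exists>i<n. i \<notin> {j, predm n j, v}" by (rule avoid[OF _ c]) simp
    then obtain i where i: "i < n" "i \<notin> {j, predm n j, v}" by blast
    show ?thesis using i j okH_alt[of i n j] by (intro bexI[of _ i]) (auto simp: Hg_verts adjBA)
  qed
  show "\<exists>z\<in>verts (Hg n). z \<noteq> u \<and> (z \<in> {..<n} \<longleftrightarrow> u \<in> {..<n}) \<and> common (Hg n) u z" if u: "u \<in> verts (Hg n)" for u
  proof (rule Hcases[OF u])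
    assume ui: "u < n"
    have c1: "card {u} < n" using n by simp
    have "\<exists>i<n. i \<notin> {u}" by (rule avoid[OF _ c1]) simp
    then obtain i where i: "i < n" "i \<noteq> u" by blast
    have c: "card {u, sucm n u, i, sucm n i} < n" using card4[of u "sucm n u" i "sucm n i"] n by linarith
    have "\<exists>j<n. j \<notin> {u, sucm n u, i, sucm n i}" by (rule avoid[OF _ c]) simp
    then obtain j where j: "j < n" "j \<notin> {u, sucm n u, i, sucm n i}" by blast
    have "common (Hg n) u i" unfolding common_def using j i ui
      by (intro bexI[of _ "n + j"]) (auto simp: Hg_verts adjBA okH_def)
    then show ?thesis using i ui by (intro bexI[of _ i]) (auto simp: Hg_verts)
  next
    fix j assume j: "j < n" "u = n + j"
    have c1: "card {j} < n" using n by simp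
    have "\<exists>i<n. i \<notin> {j}" by (rule avoid[OF _ c1]) simp
    then obtain j' where j': "j' < n" "j' \<noteq> j" by blast
    have c: "card {j, predm n j, j', predm n j'} < n" using card4[of j "predm n j" j' "predm n j'"] n by linarith
    have "\<exists>i<n. i \<notin> {j, predm n j, j', predm n j'}" by (rule avoid[OF _ c]) simp
    then obtain i where i: "i < n" "i \<notin> {j, predm n j, j', predm n j'}" by blast
    have "common (Hg n) u (n + j')" unfolding common_def using j j' i okH_alt[of i n j] okH_alt[of i n j']
      by (intro bexI[of _ i]) (auto simp: Hg_verts adjAB)
    then show ?thesis using j j' by (intro bexI[of _ "n + j'"]) (auto simp: Hg_verts)
  qed
  show "\<exists>z\<in>verts (Hg n). (z \<in> {..<n} \<longleftrightarrow> u \<notin> {..<n}) \<and> \<not> adj (Hg n) u z" if u: "u \<in> verts (Hg n)" for u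
  proof (rule Hcases[OF u])
    assume ui: "u < n"
    show ?thesis using ui by (intro bexI[of _ "n + u"]) (auto simp: Hg_verts adjAB okH_def)
  next
    fix j assume j: "j < n" "u = n + j"
    show ?thesis using j by (intro bexI[of _ j]) (auto simp: Hg_verts adjBA okH_def)
  qed
  show "\<exists>z\<in>verts (Hg n). adj (Hg n) z u \<and> \<not> adj (Hg n) z v"
    if u: "u \<in> verts (Hg n)" and v: "v \<in> verts (Hg n)" and uv: "u \<noteq> v" and s: "(u \<in> {..<n} \<longleftrightarrow> v \<in> {..<n})" for u v
  proof (rule Hcases[OF u])
    assume ui: "u < n"
    then have vi: "v < n" using s by simp
    show ?thesis
    proof (cases "v = sucm n u")
      case False
      then show ?thesis using ui vi uv by (intro bexI[of _ "n + v"]) (auto simp: Hg_verts adjBA okH_def)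
    next
      case True
      have "sucm n v \<noteq> u" "sucm n v \<noteq> v" using sucm2[OF n2(2) ui] sucm_neq[OF n2(1) vi] True by auto
      then show ?thesis using ui vi uv True sucm_lt[OF vi]
        by (intro bexI[of _ "n + sucm n v"]) (auto simp: Hg_verts adjBA okH_def)
    qed
  next
    fix j assume j: "j < n" "u = n + j"
    then obtain j' where j': "j' < n" "v = n + j'" using s v Hcases by (metis lessThan_iff not_add_less1)
    have jj: "j \<noteq> j'" using uv j j' by auto
    show ?thesis
    proof (cases "j' = predm n j")
      case False
      then show ?thesis using j j' jj okH_alt[of j' n j] okH_alt[of j' n j']
        by (intro bexI[of _ "j'"]) (auto simp: Hg_verts adjAB)
    next
      case True
      have "predm n j' \<noteq> j" "predm n j' \<noteq> j'" using predm2[OF n2(2) j(1)] predm_neq[OF n2(1) j'(1)] True by auto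
      then show ?thesis using j j' jj True okH_alt[of "predm n j'" n j] okH_alt[of "predm n j'" n j'] predm_lt[OF j'(1)]
        by (intro bexI[of _ "predm n j'"]) (auto simp: Hg_verts adjAB)
    qed
  qed
  show "\<exists>z\<in>verts (Hg n). z \<noteq> u \<and> z \<noteq> v \<and> (z \<in> {..<n} \<longleftrightarrow> u \<in> {..<n})"
    if u: "u \<in> verts (Hg n)" and v: "v \<in> verts (Hg n)" and uv: "u \<noteq> v" and s: "(u \<in> {..<n} \<longleftrightarrow> v \<in> {..<n})" for u v
  proof (rule Hcases[OF u])
    assume ui: "u < n"
    have c: "card {u, v} < n" using card2[of u v] n by linarith
    have "\<exists>i<n. i \<notin> {u, v}" by (rule avoid[OF _ c]) simp
    then obtain i where "i < n" "i \<notin> {u, v}" by blast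
    then show ?thesis using ui by (intro bexI[of _ i]) (auto simp: Hg_verts)
  next
    fix j assume j: "j < n" "u = n + j"
    have c: "card {u - n, v - n} < n" using card2[of "u - n" "v - n"] n by linarith
    have "\<exists>i<n. i \<notin> {u - n, v - n}" by (rule avoid[OF _ c]) simp
    then obtain i where "i < n" "i \<notin> {u - n, v - n}" by blast
    then show ?thesis using j by (intro bexI[of _ "n + i"]) (auto simp: Hg_verts)
  qed
  show "\<exists>z\<in>verts (Hg n). z \<noteq> u \<and> (z \<in> {..<n} \<longleftrightarrow> u \<in> {..<n}) \<and> \<not> adj (Hg n) z v"
    if u: "u \<in> verts (Hg n)" and v: "v \<in> verts (Hg n)" and s: "(u \<in> {..<n} \<longleftrightarrow> v \<notin> {..<n})" for u v
  proof (rule Hcases[OF u])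
    assume ui: "u < n"
    then obtain j where j: "j < n" "v = n + j" using s v Hcases by (metis lessThan_iff)
    have "predm n j \<noteq> j" using predm_neq[OF n2(1) j(1)] .
    then have "\<exists>z\<in>{j, predm n j}. z \<noteq> u" by auto
    then obtain z where z: "z \<in> {j, predm n j}" "z \<noteq> u" by blast
    have zl: "z < n" using z predm_lt[OF j(1)] j by auto
    have "\<not> okH n z j" using z okH_alt[OF zl j(1)] by auto
    then show ?thesis using z zl j ui by (intro bexI[of _ z]) (auto simp: Hg_verts adjAB)
  next
    fix j assume j: "j < n" "u = n + j"
    then have vi: "v < n" using s v by auto
    have "sucm n v \<noteq> v" using sucm_neq[OF n2(1) vi] .
    then have "\<exists>z\<in>{v, sucm n v}. z \<noteq> j" by auto
    then obtain z where z: "z \<in> {v, sucm n v}" "z \<noteq> j" by blast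
    have zl: "z < n" using z sucm_lt[OF vi] vi by auto
    have "\<not> okH n v z" using z unfolding okH_def by auto
    then show ?thesis using z zl j vi by (intro bexI[of _ "n + z"]) (auto simp: Hg_verts adjBA)
  qed
qed

lemma Hg_C4: "n \<ge> 5 \<Longrightarrow> contains_subgraph (Hg n) C4"
  by (rule C4_make[of _ 0 "n + 3" 1 "n + 4"]) (auto simp: Hg_adj Hg_verts okH_def sucm_def Hg_wf)

lemma Hg_kconn:
  assumes k: "k \<ge> 1" and n: "n \<ge> k + 6"
  shows "k_connected k (Hg n)"
proof (rule k_connI[OF Hg_wf k])
  show "k < card (verts (Hg n))" using n by (simp add: Hg_verts)
  fix S assume S: "S \<subseteq> verts (Hg n)" "card S < k"
  have finS: "finite S" using S(1) finite_subset by (auto simp: Hg_verts)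
  have "\<exists>i<n. i \<notin> S" by (rule avoid[OF finS]) (use S n in linarith)
  then obtain c where c: "c < n" "c \<notin> S" by blast
  let ?E = "(edge_rel (del_verts (Hg n) S))\<^sup>*"
  have Areach: "(i, c) \<in> ?E" if i: "i < n" "i \<notin> S" for i
  proof -
    let ?X = "{i, sucm n i, c, sucm n c} \<union> (\<lambda>v. v - n) ` S"
    have "card ?X \<le> card {i, sucm n i, c, sucm n c} + card ((\<lambda>v. v - n) ` S)" by (rule card_Un_le)
    also have "\<dots> \<le> 4 + card S" using card4[of i "sucm n i" c "sucm n c"] card_image_le[OF finS, of "\<lambda>v. v - n"] by linarith
    finally have cX: "card ?X < n" using S n by linarith
    have "\<exists>j<n. j \<notin> ?X" by (rule avoid[OF _ cX]) (simp add: finS)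
    then obtain j where j: "j < n" "j \<notin> ?X" by blast
    have nj: "n + j \<notin> S" using j by (metis UnI2 add_diff_cancel_left' image_eqI)
    have e1: "(i, n + j) \<in> ?E" by (rule del_edge) (use i j nj in \<open>auto simp: Hg_verts adjAB okH_def\<close>)
    have e2: "(n + j, c) \<in> ?E" by (rule del_edge) (use c j nj in \<open>auto simp: Hg_verts adjBA okH_def\<close>)
    show ?thesis using rtrancl_trans[OF e1 e2] .
  qed
  show "connected (del_verts (Hg n) S)"
  proof (rule hub_conn_del[OF Hg_wf])
    show "c \<in> verts (Hg n) - S" using c by (simp add: Hg_verts)
    fix x assume x: "x \<in> verts (Hg n) - S"
    show "(x, c) \<in> ?E"
    proof (rule Hcases[of x n])
      show "x \<in> verts (Hg n)" using x by blast
      assume "x < n" then show ?thesis using Areach x by blast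
    next
      fix j assume j: "j < n" "x = n + j"
      let ?X = "{j, predm n j} \<union> S"
      have "card ?X \<le> card {j, predm n j} + card S" by (rule card_Un_le)
      then have cX: "card ?X < n" using card2[of j "predm n j"] S n by linarith
      have "\<exists>i<n. i \<notin> ?X" by (rule avoid[OF _ cX]) (simp add: finS)
      then obtain i where i: "i < n" "i \<notin> ?X" by blast
      have "okH n i j" using okH_alt[OF i(1) j(1)] i by auto
      then have e1: "(x, i) \<in> ?E" by (intro del_edge) (use i j x in \<open>auto simp: Hg_verts adjBA\<close>)
      show ?thesis using rtrancl_trans[OF e1 Areach[of i]] i by blast
    qed
  qed
qed


section \<open>Arithmetic mod p\<close>

definition inc :: "nat \<Rightarrow> nat \<Rightarrow> nat \<Rightarrow> nat \<Rightarrow> nat \<Rightarrow> bool" where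
  "inc p a b m c \<longleftrightarrow> int p dvd (int b - int m * int a - int c)"

lemma eq_of_dvd:
  assumes "(x::nat) < p" "y < p" "int p dvd (int x - int y)"
  shows "x = y"
proof (rule ccontr)
  assume "x \<noteq> y"
  then have "int x - int y \<noteq> 0" by simp
  from dvd_imp_le_int[OF this assms(3)] have "int p \<le> \<bar>int x - int y\<bar>" by simp
  then show False using assms(1,2) by linarith
qed

lemma two_lines:
  assumes p: "prime p" and lt: "a < p" "a' < p" "b < p" "b' < p" "m < p" "m' < p" "c < p" "c' < p"
    and i: "inc p a b m c" "inc p a b m' c'" "inc p a' b' m c" "inc p a' b' m' c'"
    and ne: "(a,b) \<noteq> (a',b')"
  shows "m = m' \<and> c = c'"
proof -
  let ?P = "int p"
  have i': "?P dvd (int b - int m * int a - int c)" "?P dvd (int b - int m' * int a - int c')"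
    "?P dvd (int b' - int m * int a' - int c)" "?P dvd (int b' - int m' * int a' - int c')"
    using i unfolding inc_def by auto
  have d: "?P dvd ((int b - int m * int a - int c) - (int b - int m' * int a - int c')
      - ((int b' - int m * int a' - int c) - (int b' - int m' * int a' - int c')))"
    using dvd_diff[OF dvd_diff[OF i'(1,2)] dvd_diff[OF i'(3,4)]] .
  have "(int b - int m * int a - int c) - (int b - int m' * int a - int c')
      - ((int b' - int m * int a' - int c) - (int b' - int m' * int a' - int c'))
      = (int m' - int m) * (int a - int a')" by (simp add: algebra_simps)
  with d have "?P dvd (int m' - int m) * (int a - int a')" by simp
  moreover have "prime ?P" using p by simp
  ultimately have "?P dvd (int m' - int m) \<or> ?P dvd (int a - int a')" using prime_dvd_mult_iff by blast
  then show ?thesis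
  proof
    assume "?P dvd (int m' - int m)"
    then have mm: "m' = m" using eq_of_dvd lt by blast
    have "?P dvd ((int b - int m * int a - int c) - (int b - int m' * int a - int c'))"
      using dvd_diff[OF i'(1,2)] .
    moreover have "(int b - int m * int a - int c) - (int b - int m' * int a - int c') = int c' - int c"
      using mm by simp
    ultimately have "c' = c" using eq_of_dvd lt by simp
    then show ?thesis using mm by simp
  next
    assume "?P dvd (int a - int a')"
    then have aa: "a = a'" using eq_of_dvd lt by blast
    have "?P dvd ((int b - int m * int a - int c) - (int b' - int m * int a' - int c))"
      using dvd_diff[OF i'(1,3)] .
    moreover have "(int b - int m * int a - int c) - (int b' - int m * int a' - int c) = int b - int b'"
      using aa by simp
    ultimately have "b = b'" using eq_of_dvd lt by simp
    then show ?thesis using aa ne by simp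
  qed
qed

lemma line_through:
  assumes p0: "p > 0"
  obtains c where "c < p" "inc p a b m c"
proof -
  let ?c = "nat ((int b - int m * int a) mod int p)"
  have c0: "(int b - int m * int a) mod int p \<ge> 0" using p0 by simp
  have "?c < p" using p0 by (simp add: nat_less_iff)
  moreover have "inc p a b m ?c" unfolding inc_def using c0
    by (simp add: minus_mod_eq_mult_div[symmetric])
  ultimately show ?thesis using that by blast
qed

lemma point_on:
  assumes p0: "p > 0"
  obtains y where "y < p" "inc p x y m c"
proof -
  let ?y = "nat ((int m * int x + int c) mod int p)"
  have c0: "(int m * int x + int c) mod int p \<ge> 0" using p0 by simp
  have "?y < p" using p0 by (simp add: nat_less_iff)
  moreover have "int p dvd (int ?y - int m * int x - int c)" using c0
    by (metis diff_diff_eq dvd_minus_iff minus_diff_eq minus_mod_eq_mult_div dvd_triv_left int_nat_eq)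
  ultimately show ?thesis using that unfolding inc_def by blast
qed

lemma intersect:
  assumes p: "prime p" and lt: "m < p" "m' < p" and ne: "m \<noteq> m'"
  obtains x y where "x < p" "y < p" "inc p x y m c" "inc p x y m' c'"
proof -
  let ?P = "int p"
  have p0: "p > 0" using p prime_gt_0_nat by blast
  have nd: "\<not> ?P dvd (int m - int m')"
  proof
    assume "?P dvd (int m - int m')"
    then have "m = m'" using eq_of_dvd lt by blast
    then show False using ne by simp
  qed
  have "prime ?P" using p by simp
  then have cop: "coprime (int m - int m') ?P" using nd
    by (simp add: prime_imp_coprime coprime_commute)
  obtain u v where uv: "u * (int m - int m') + v * ?P = gcd (int m - int m') ?P" using bezout_int by blast
  then have uv1: "u * (int m - int m') + v * ?P = 1" using cop by simp
  let ?w = "u * (int c' - int c)"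
  let ?x = "nat (?w mod ?P)"
  have x0: "?w mod ?P \<ge> 0" using p0 by simp
  have xlt: "?x < p" using p0 by (simp add: nat_less_iff)
  have xeq: "int ?x = ?w mod ?P" using x0 by simp
  have d1: "?P dvd ((int m - int m') * int ?x - (int c' - int c))"
  proof -
    have "(int m - int m') * int ?x - (int c' - int c)
        = (int m - int m') * (?w mod ?P - ?w) + ((u * (int m - int m') - 1) * (int c' - int c))"
      unfolding xeq by (simp add: algebra_simps)
    also have "\<dots> = (int m - int m') * (- (?P * (?w div ?P))) + (- v * ?P) * (int c' - int c)"
    proof -
      have e1: "?w mod ?P - ?w = - (?P * (?w div ?P))" using minus_mod_eq_mult_div[of ?w ?P] by simp
      have e2: "u * (int m - int m') - 1 = - v * ?P" using uv1 by simp
      show ?thesis by (simp only: e1 e2)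
    qed
    finally show ?thesis by simp
  qed
  obtain y where y: "y < p" "inc p ?x y m c" using point_on[OF p0] by blast
  have D: "?P dvd ((int y - int m * int ?x - int c) + ((int m - int m') * int ?x - (int c' - int c)))"
    using y(2) d1 unfolding inc_def by (rule dvd_add)
  have E: "(int y - int m * int ?x - int c) + ((int m - int m') * int ?x - (int c' - int c)) = int y - int m' * int ?x - int c'"
    by (simp only: algebra_simps)
  have "inc p ?x y m' c'" using D unfolding E inc_def .
  then show ?thesis using that xlt y by blast
qed


definition cthr :: "nat \<Rightarrow> nat \<Rightarrow> nat \<Rightarrow> nat \<Rightarrow> nat" where
  "cthr p a b m = nat ((int b - int m * int a) mod int p)"
definition yon :: "nat \<Rightarrow> nat \<Rightarrow> nat \<Rightarrow> nat \<Rightarrow> nat" where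
  "yon p m c x = nat ((int m * int x + int c) mod int p)"

lemma cthr_props: "p > 0 \<Longrightarrow> cthr p a b m < p \<and> inc p a b m (cthr p a b m)"
proof -
  assume p0: "p > 0"
  have c0: "(int b - int m * int a) mod int p \<ge> 0" using p0 by simp
  have "cthr p a b m < p" using p0 unfolding cthr_def by (simp add: nat_less_iff)
  moreover have "inc p a b m (cthr p a b m)" unfolding inc_def cthr_def using c0
    by (simp add: minus_mod_eq_mult_div[symmetric])
  ultimately show ?thesis by blast
qed

lemma yon_props: "p > 0 \<Longrightarrow> yon p m c x < p \<and> inc p x (yon p m c x) m c"
proof -
  assume p0: "p > 0"
  have c0: "(int m * int x + int c) mod int p \<ge> 0" using p0 by simp
  have "yon p m c x < p" using p0 unfolding yon_def by (simp add: nat_less_iff)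
  moreover have "int p dvd (int (yon p m c x) - int m * int x - int c)" unfolding yon_def using c0
    by (metis diff_diff_eq dvd_minus_iff minus_diff_eq minus_mod_eq_mult_div dvd_triv_left int_nat_eq)
  ultimately show ?thesis unfolding inc_def by blast
qed

lemma inc_unique_y: "y < p \<Longrightarrow> y' < p \<Longrightarrow> inc p x y m c \<Longrightarrow> inc p x y' m c \<Longrightarrow> y = y'"
proof -
  assume a: "y < p" "y' < p" "inc p x y m c" "inc p x y' m c"
  have "int p dvd ((int y - int m * int x - int c) - (int y' - int m * int x - int c))"
    using a(3,4) unfolding inc_def by (rule dvd_diff)
  then have "int p dvd (int y - int y')" by simp
  then show ?thesis using eq_of_dvd a by blast
qed

definition pt :: "nat \<Rightarrow> nat \<Rightarrow> nat \<Rightarrow> nat" where "pt p a b = a * p + b"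
definition lnv :: "nat \<Rightarrow> nat \<Rightarrow> nat \<Rightarrow> nat" where "lnv p m c = p * p + m * p + c"

definition Gp :: "nat \<Rightarrow> graph" where
  "Gp p = ({0..<2*p*p}, \<lambda>u w. \<exists>a b m c. a < p \<and> b < p \<and> m < p \<and> c < p \<and> inc p a b m c
      \<and> ((u = pt p a b \<and> w = lnv p m c) \<or> (u = lnv p m c \<and> w = pt p a b)))"

lemma Gp_verts: "verts (Gp p) = {0..<2*p*p}" by (simp add: Gp_def verts_def)
lemma Gp_adj: "adj (Gp p) u w \<longleftrightarrow> (\<exists>a b m c. a < p \<and> b < p \<and> m < p \<and> c < p \<and> inc p a b m c
      \<and> ((u = pt p a b \<and> w = lnv p m c) \<or> (u = lnv p m c \<and> w = pt p a b)))"
  by (simp add: Gp_def adj_def)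

lemma pt_lt: "a < p \<Longrightarrow> b < p \<Longrightarrow> pt p a b < p * p"
proof -
  assume "a < p" "b < p"
  then have "a * p + b < a * p + p" by simp
  also have "\<dots> = (a + 1) * p" by simp
  also have "\<dots> \<le> p * p" using \<open>a < p\<close> by (intro mult_right_mono) auto
  finally show ?thesis unfolding pt_def .
qed

lemma lnv_ge: "p * p \<le> lnv p m c" unfolding lnv_def by simp
lemma lnv_lt: "m < p \<Longrightarrow> c < p \<Longrightarrow> lnv p m c < 2 * p * p"
  using pt_lt[of m p c] unfolding lnv_def pt_def by simp

lemma pt_inj: "b < p \<Longrightarrow> b' < p \<Longrightarrow> pt p a b = pt p a' b' \<longleftrightarrow> a = a' \<and> b = b'"
proof
  assume b: "b < p" "b' < p" and e: "pt p a b = pt p a' b'"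
  have "(a * p + b) div p = a" "(a * p + b) mod p = b" "(a' * p + b') div p = a'" "(a' * p + b') mod p = b'"
    using b by auto
  then show "a = a' \<and> b = b'" using e unfolding pt_def by metis
qed simp

lemma lnv_inj: "c < p \<Longrightarrow> c' < p \<Longrightarrow> lnv p m c = lnv p m' c' \<longleftrightarrow> m = m' \<and> c = c'"
  using pt_inj[of c p c' m m'] unfolding lnv_def pt_def by simp

lemma pt_ne_lnv: "a < p \<Longrightarrow> b < p \<Longrightarrow> pt p a b \<noteq> lnv p m c"
  using pt_lt[of a p b] lnv_ge[of p m c] by linarith

lemma Gp_cases:
  assumes u: "u \<in> verts (Gp p)"
    and P: "\<And>a b. a < p \<Longrightarrow> b < p \<Longrightarrow> u = pt p a b \<Longrightarrow> thesis"
    and L: "\<And>m c. m < p \<Longrightarrow> c < p \<Longrightarrow> u = lnv p m c \<Longrightarrow> thesis"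
  shows thesis
proof (cases "u < p * p")
  case True
  then have p0: "p > 0" by (cases p) auto
  have "u div p < p" using True by (simp add: less_mult_imp_div_less)
  moreover have "u mod p < p" using p0 by simp
  moreover have "u = pt p (u div p) (u mod p)" unfolding pt_def by simp
  ultimately show ?thesis using P by blast
next
  case False
  let ?v = "u - p * p"
  have ul: "u < 2 * p * p" using u by (simp add: Gp_verts)
  then have vl: "?v < p * p" using False by simp
  then have p0: "p > 0" by (cases p) auto
  have "?v div p < p" using vl by (simp add: less_mult_imp_div_less)
  moreover have "?v mod p < p" using p0 by simp
  moreover have "u = lnv p (?v div p) (?v mod p)" unfolding lnv_def using False by simp
  ultimately show ?thesis using L by blast
qed

lemma adj_pl: "a < p \<Longrightarrow> b < p \<Longrightarrow> m < p \<Longrightarrow> c < p \<Longrightarrow> adj (Gp p) (pt p a b) (lnv p m c) \<longleftrightarrow> inc p a b m c"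
  unfolding Gp_adj using pt_inj lnv_inj pt_ne_lnv by metis
lemma adj_lp: "a < p \<Longrightarrow> b < p \<Longrightarrow> m < p \<Longrightarrow> c < p \<Longrightarrow> adj (Gp p) (lnv p m c) (pt p a b) \<longleftrightarrow> inc p a b m c"
  unfolding Gp_adj using pt_inj lnv_inj pt_ne_lnv by metis
lemma adj_pp: "a < p \<Longrightarrow> b < p \<Longrightarrow> a' < p \<Longrightarrow> b' < p \<Longrightarrow> \<not> adj (Gp p) (pt p a b) (pt p a' b')"
  unfolding Gp_adj using pt_ne_lnv by metis
lemma adj_ll: "m < p \<Longrightarrow> c < p \<Longrightarrow> m' < p \<Longrightarrow> c' < p \<Longrightarrow> \<not> adj (Gp p) (lnv p m c) (lnv p m' c')"
  unfolding Gp_adj using pt_ne_lnv by metis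

lemma pt_in: "a < p \<Longrightarrow> b < p \<Longrightarrow> pt p a b \<in> verts (Gp p)"
  using pt_lt[of a p b] by (simp add: Gp_verts)
lemma lnv_in: "m < p \<Longrightarrow> c < p \<Longrightarrow> lnv p m c \<in> verts (Gp p)"
  using lnv_lt[of m p c] by (simp add: Gp_verts)

lemma Gp_adj_in: "adj (Gp p) u w \<Longrightarrow> u \<in> verts (Gp p) \<and> w \<in> verts (Gp p)"
proof -
  assume "adj (Gp p) u w"
  then obtain a b m c where "a < p" "b < p" "m < p" "c < p"
    "(u = pt p a b \<and> w = lnv p m c) \<or> (u = lnv p m c \<and> w = pt p a b)" unfolding Gp_adj by blast
  then show "u \<in> verts (Gp p) \<and> w \<in> verts (Gp p)" using pt_in lnv_in by blast
qed

lemma Gp_wf: "wf_graph (Gp p)"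
proof -
  have "finite (verts (Gp p))" by (simp add: Gp_verts)
  moreover have "\<forall>u w. adj (Gp p) u w \<longrightarrow> adj (Gp p) w u" unfolding Gp_adj by blast
  moreover have "\<forall>u. \<not> adj (Gp p) u u" unfolding Gp_adj using pt_ne_lnv by metis
  ultimately show ?thesis unfolding wf_graph_def using Gp_adj_in by blast
qed

lemma Gp_bip: "bip (Gp p) {..<p*p}"
  unfolding bip_def Gp_adj using pt_lt lnv_ge by (metis lessThan_iff not_le)


lemma ms1: "(p::nat) \<ge> 2 \<Longrightarrow> b < p \<Longrightarrow> (b + 1) mod p \<noteq> b"
proof -
  assume a: "p \<ge> 2" "b < p"
  show ?thesis
  proof (cases "b + 1 < p")
    case True then show ?thesis by simp
  next
    case False then have "b + 1 = p" using a by simp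
    then show ?thesis using a by simp
  qed
qed
lemma ms_suc: "(p::nat) \<ge> 2 \<Longrightarrow> Suc x mod p \<noteq> x mod p"
  by (simp add: mod_Suc)
lemma ms2: "(p::nat) \<ge> 3 \<Longrightarrow> b < p \<Longrightarrow> (b + 2) mod p \<noteq> b"
proof -
  assume a: "p \<ge> 3" "b < p"
  consider "b + 2 < p" | "b + 2 = p" | "b + 2 = p + 1" using a by linarith
  then show ?thesis
  proof cases
    case 1 then show ?thesis by simp
  next
    case 2 then show ?thesis using a by simp
  next
    case 3
    then have "(b + 2) mod p = 1 mod p" by (metis add.commute mod_add_self2)
    then show ?thesis using a 3 by simp
  qed
qed
lemma ms12: "(p::nat) \<ge> 2 \<Longrightarrow> (b + 1) mod p \<noteq> (b + 2) mod p"
  using ms_suc[of p "b + 1"] by (simp add: add.commute)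

lemma three_avoid: "x \<noteq> y \<Longrightarrow> x \<noteq> z \<Longrightarrow> y \<noteq> z \<Longrightarrow> \<exists>w\<in>{x,y,z::nat}. w \<noteq> u \<and> w \<noteq> v"
  by auto
lemma two_avoid: "x \<noteq> y \<Longrightarrow> \<exists>w\<in>{x,y::nat}. w \<noteq> u"
  by auto

lemma inc_iff_eq: "b < p \<Longrightarrow> c < p \<Longrightarrow> int p dvd (int b - int c) \<longleftrightarrow> b = c"
  using eq_of_dvd by auto

lemma inc_slope0: "b < p \<Longrightarrow> c < p \<Longrightarrow> inc p a b 0 c \<longleftrightarrow> b = c"
  unfolding inc_def using inc_iff_eq by simp
lemma inc_x0: "y < p \<Longrightarrow> c < p \<Longrightarrow> inc p 0 y m c \<longleftrightarrow> y = c"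
  unfolding inc_def using inc_iff_eq by simp

lemma Gp_rich:
  assumes p: "prime p" and p7: "p \<ge> 7"
  shows "rich (Gp p)"
proof (rule rich_bip[OF Gp_wf Gp_bip])
  have p0: "p > 0" "p \<ge> 2" "p \<ge> 3" using p7 by auto
  note ct = cthr_props[OF p0(1)] and yo = yon_props[OF p0(1)]
  have ptX: "pt p a b \<in> {..<p*p}" if "a < p" "b < p" for a b using pt_lt that by simp
  have lnX: "lnv p m c \<notin> {..<p*p}" for m c using lnv_ge[of p m c] by simp
  have one: "1 < p" using p0 by simp
  show "\<exists>z\<in>verts (Gp p). adj (Gp p) u z \<and> z \<noteq> v" if u: "u \<in> verts (Gp p)" for u v
  proof (rule Gp_cases[OF u])
    fix a b assume ab: "a < p" "b < p" "u = pt p a b"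
    let ?L0 = "lnv p 0 (cthr p a b 0)" and ?L1 = "lnv p 1 (cthr p a b 1)"
    have "?L0 \<noteq> ?L1" using lnv_inj ct by simp
    moreover have "adj (Gp p) u ?L0" "adj (Gp p) u ?L1" using ab ct adj_pl one p0 by auto
    moreover have "?L0 \<in> verts (Gp p)" "?L1 \<in> verts (Gp p)" using lnv_in[OF _ conjunct1[OF ct]] one p0 by auto
    ultimately show ?thesis by metis
  next
    fix m c assume mc: "m < p" "c < p" "u = lnv p m c"
    let ?R0 = "pt p 0 (yon p m c 0)" and ?R1 = "pt p 1 (yon p m c 1)"
    have "?R0 \<noteq> ?R1" using pt_inj yo by simp
    moreover have "adj (Gp p) u ?R0" "adj (Gp p) u ?R1" using mc yo adj_lp one p0 by auto
    moreover have "?R0 \<in> verts (Gp p)" "?R1 \<in> verts (Gp p)" using pt_in yo one p0 by auto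
    ultimately show ?thesis by metis
  qed
  show "\<exists>z\<in>verts (Gp p). z \<noteq> u \<and> (z \<in> {..<p*p} \<longleftrightarrow> u \<in> {..<p*p}) \<and> common (Gp p) u z" if u: "u \<in> verts (Gp p)" for u
  proof (rule Gp_cases[OF u])
    fix a b assume ab: "a < p" "b < p" "u = pt p a b"
    let ?z = "pt p ((a + 1) mod p) b"
    have zl: "(a + 1) mod p < p" using p0 by simp
    have "?z \<noteq> u" using ab pt_inj ms1[OF p0(2) ab(1)] by simp
    moreover have "common (Gp p) u ?z" unfolding common_def
      using ab zl adj_lp lnv_in inc_slope0 p0 by (intro bexI[of _ "lnv p 0 b"]) auto
    ultimately show ?thesis using ab zl ptX pt_in by (intro bexI[of _ ?z]) auto
  next
    fix m c assume mc: "m < p" "c < p" "u = lnv p m c"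
    let ?z = "lnv p ((m + 1) mod p) c"
    have zl: "(m + 1) mod p < p" using p0 by simp
    have "?z \<noteq> u" using mc lnv_inj ms1[OF p0(2) mc(1)] by simp
    moreover have "common (Gp p) u ?z" unfolding common_def
    proof (intro bexI[of _ "pt p 0 c"] conjI)
      show "adj (Gp p) (pt p 0 c) u" using mc adj_pl inc_x0 p0 by simp
      show "adj (Gp p) (pt p 0 c) ?z" using mc zl adj_pl inc_x0 p0 by simp
      show "pt p 0 c \<in> verts (Gp p)" using pt_in mc p0 by simp
    qed
    ultimately show ?thesis using mc zl lnX lnv_in by (intro bexI[of _ ?z]) auto
  qed
  show "\<exists>z\<in>verts (Gp p). (z \<in> {..<p*p} \<longleftrightarrow> u \<notin> {..<p*p}) \<and> \<not> adj (Gp p) u z" if u: "u \<in> verts (Gp p)" for u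
  proof (rule Gp_cases[OF u])
    fix a b assume ab: "a < p" "b < p" "u = pt p a b"
    have zl: "(b + 1) mod p < p" using p0 by simp
    have "\<not> inc p a b 0 ((b + 1) mod p)" using inc_slope0[OF ab(2) zl] ms1[OF p0(2) ab(2)] by simp
    then show ?thesis using ab zl adj_pl lnv_in ptX lnX p0 by (intro bexI[of _ "lnv p 0 ((b + 1) mod p)"]) auto
  next
    fix m c assume mc: "m < p" "c < p" "u = lnv p m c"
    have zl: "(c + 1) mod p < p" using p0 by simp
    have "\<not> inc p 0 ((c + 1) mod p) m c" using inc_x0[OF zl mc(2)] ms1[OF p0(2) mc(2)] by simp
    then show ?thesis using mc zl adj_lp pt_in ptX lnX p0 by (intro bexI[of _ "pt p 0 ((c + 1) mod p)"]) auto
  qed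
  show "\<exists>z\<in>verts (Gp p). adj (Gp p) z u \<and> \<not> adj (Gp p) z v"
    if u: "u \<in> verts (Gp p)" and v: "v \<in> verts (Gp p)" and uv: "u \<noteq> v" and s: "(u \<in> {..<p*p} \<longleftrightarrow> v \<in> {..<p*p})" for u v
  proof (rule Gp_cases[OF u])
    fix a b assume ab: "a < p" "b < p" "u = pt p a b"
    obtain a' b' where ab': "a' < p" "b' < p" "v = pt p a' b'"
      using Gp_cases[OF v] s ab ptX lnX by metis
    have ne: "(a,b) \<noteq> (a',b')" using uv ab ab' by auto
    let ?c0 = "cthr p a b 0" and ?c1 = "cthr p a b 1"
    have cc: "?c0 < p" "inc p a b 0 ?c0" "?c1 < p" "inc p a b 1 ?c1" using ct by auto
    have "\<not> (inc p a' b' 0 ?c0 \<and> inc p a' b' 1 ?c1)"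
    proof
      assume "inc p a' b' 0 ?c0 \<and> inc p a' b' 1 ?c1"
      then have "(0::nat) = 1 \<and> ?c0 = ?c1" using two_lines[OF p ab(1) ab'(1) ab(2) ab'(2) _ one cc(1) cc(3) cc(2) cc(4) _ _ ne] p0 by auto
      then show False by simp
    qed
    then have "\<not> inc p a' b' 0 ?c0 \<or> \<not> inc p a' b' 1 ?c1" by blast
    then show ?thesis
    proof
      assume "\<not> inc p a' b' 0 ?c0"
      then show ?thesis using ab ab' cc adj_lp lnv_in p0 by (intro bexI[of _ "lnv p 0 ?c0"]) auto
    next
      assume "\<not> inc p a' b' 1 ?c1"
      then show ?thesis using ab ab' cc adj_lp lnv_in one by (intro bexI[of _ "lnv p 1 ?c1"]) auto
    qed
  next
    fix m c assume mc: "m < p" "c < p" "u = lnv p m c"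
    obtain m' c' where mc': "m' < p" "c' < p" "v = lnv p m' c'"
      using Gp_cases[OF v] s mc ptX lnX by metis
    have ne: "\<not> (m = m' \<and> c = c')" using uv mc mc' by auto
    let ?y0 = "yon p m c 0" and ?y1 = "yon p m c 1"
    have yy: "?y0 < p" "inc p 0 ?y0 m c" "?y1 < p" "inc p 1 ?y1 m c" using yo by auto
    have "\<not> (inc p 0 ?y0 m' c' \<and> inc p 1 ?y1 m' c')"
    proof
      assume "inc p 0 ?y0 m' c' \<and> inc p 1 ?y1 m' c'"
      then have "m = m' \<and> c = c'" using two_lines[OF p _ one yy(1) yy(3) mc(1) mc'(1) mc(2) mc'(2) yy(2) _ yy(4)] p0 by auto
      then show False using ne by simp
    qed
    then have "\<not> inc p 0 ?y0 m' c' \<or> \<not> inc p 1 ?y1 m' c'" by blast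
    then show ?thesis
    proof
      assume "\<not> inc p 0 ?y0 m' c'"
      then show ?thesis using mc mc' yy adj_pl pt_in p0 by (intro bexI[of _ "pt p 0 ?y0"]) auto
    next
      assume "\<not> inc p 1 ?y1 m' c'"
      then show ?thesis using mc mc' yy adj_pl pt_in one by (intro bexI[of _ "pt p 1 ?y1"]) auto
    qed
  qed
  show "\<exists>z\<in>verts (Gp p). z \<noteq> u \<and> z \<noteq> v \<and> (z \<in> {..<p*p} \<longleftrightarrow> u \<in> {..<p*p})"
    if u: "u \<in> verts (Gp p)" and v: "v \<in> verts (Gp p)" and uv: "u \<noteq> v" and s: "(u \<in> {..<p*p} \<longleftrightarrow> v \<in> {..<p*p})" for u v
  proof (rule Gp_cases[OF u])
    fix a b assume ab: "a < p" "b < p" "u = pt p a b"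
    have d: "pt p 0 0 \<noteq> pt p 0 1" "pt p 0 0 \<noteq> pt p 0 2" "pt p 0 1 \<noteq> pt p 0 2" using pt_inj p0 by auto
    have "\<exists>w\<in>{pt p 0 0, pt p 0 1, pt p 0 2}. w \<noteq> u \<and> w \<noteq> v" using three_avoid[OF d] .
    moreover have "{pt p 0 0, pt p 0 1, pt p 0 2} \<subseteq> verts (Gp p) \<inter> {..<p*p}" using pt_in ptX p0 by auto
    ultimately show ?thesis using ab ptX by blast
  next
    fix m c assume mc: "m < p" "c < p" "u = lnv p m c"
    have d: "lnv p 0 0 \<noteq> lnv p 0 1" "lnv p 0 0 \<noteq> lnv p 0 2" "lnv p 0 1 \<noteq> lnv p 0 2" using lnv_inj p0 by auto
    have "\<exists>w\<in>{lnv p 0 0, lnv p 0 1, lnv p 0 2}. w \<noteq> u \<and> w \<noteq> v" using three_avoid[OF d] .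
    moreover have "{lnv p 0 0, lnv p 0 1, lnv p 0 2} \<subseteq> verts (Gp p) - {..<p*p}" using lnv_in lnX p0 by auto
    ultimately show ?thesis using mc lnX by blast
  qed
  show "\<exists>z\<in>verts (Gp p). z \<noteq> u \<and> (z \<in> {..<p*p} \<longleftrightarrow> u \<in> {..<p*p}) \<and> \<not> adj (Gp p) z v"
    if u: "u \<in> verts (Gp p)" and v: "v \<in> verts (Gp p)" and s: "(u \<in> {..<p*p} \<longleftrightarrow> v \<notin> {..<p*p})" for u v
  proof (rule Gp_cases[OF u])
    fix a b assume ab: "a < p" "b < p" "u = pt p a b"
    obtain m c where mc: "m < p" "c < p" "v = lnv p m c"
      using Gp_cases[OF v] s ab ptX lnX by metis
    let ?y0 = "(yon p m c 0 + 1) mod p" and ?y1 = "(yon p m c 1 + 1) mod p"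
    have yl: "?y0 < p" "?y1 < p" using p0 by auto
    have n0: "\<not> inc p 0 ?y0 m c"
      using inc_unique_y[OF yl(1) _ _ conjunct2[OF yo[of m c 0]]] conjunct1[OF yo[of m c 0]] ms1[OF p0(2), of "yon p m c 0"] by auto
    have n1: "\<not> inc p 1 ?y1 m c"
      using inc_unique_y[OF yl(2) _ _ conjunct2[OF yo[of m c 1]]] conjunct1[OF yo[of m c 1]] ms1[OF p0(2), of "yon p m c 1"] by auto
    have d: "pt p 0 ?y0 \<noteq> pt p 1 ?y1" using pt_inj yl by simp
    have a0: "\<not> adj (Gp p) (pt p 0 ?y0) v" "\<not> adj (Gp p) (pt p 1 ?y1) v" using adj_pl mc yl n0 n1 p0 one by auto
    have "\<exists>w\<in>{pt p 0 ?y0, pt p 1 ?y1}. w \<noteq> u" using two_avoid[OF d] .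
    moreover have "{pt p 0 ?y0, pt p 1 ?y1} \<subseteq> verts (Gp p) \<inter> {..<p*p}" using pt_in ptX yl p0 one by auto
    ultimately show ?thesis using ab ptX a0 by blast
  next
    fix m c assume mc: "m < p" "c < p" "u = lnv p m c"
    obtain a b where ab: "a < p" "b < p" "v = pt p a b"
      using Gp_cases[OF v] s mc ptX lnX by metis
    let ?c1 = "(b + 1) mod p" and ?c2 = "(b + 2) mod p"
    have cl: "?c1 < p" "?c2 < p" using p0 by auto
    have n1: "\<not> inc p a b 0 ?c1" using inc_slope0[OF ab(2) cl(1)] ms1[OF p0(2) ab(2)] by simp
    have n2: "\<not> inc p a b 0 ?c2" using inc_slope0[OF ab(2) cl(2)] ms2[OF p0(3) ab(2)] by simp
    have d: "lnv p 0 ?c1 \<noteq> lnv p 0 ?c2" using lnv_inj cl ms12[OF p0(2), of b] by simp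
    have a0: "\<not> adj (Gp p) (lnv p 0 ?c1) v" "\<not> adj (Gp p) (lnv p 0 ?c2) v" using adj_lp ab cl n1 n2 p0 by auto
    have "\<exists>w\<in>{lnv p 0 ?c1, lnv p 0 ?c2}. w \<noteq> u" using two_avoid[OF d] .
    moreover have "{lnv p 0 ?c1, lnv p 0 ?c2} \<subseteq> verts (Gp p) - {..<p*p}" using lnv_in lnX cl p0 by auto
    ultimately show ?thesis using mc lnX a0 by blast
  qed
qed


lemma Gp_pt_or_ln:
  assumes u: "u \<in> verts (Gp p)"
  shows "(u \<in> {..<p*p} \<longrightarrow> (\<exists>a b. a < p \<and> b < p \<and> u = pt p a b)) \<and> (u \<notin> {..<p*p} \<longrightarrow> (\<exists>m c. m < p \<and> c < p \<and> u = lnv p m c))"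
proof (rule Gp_cases[OF u])
  fix a b assume "a < p" "b < p" "u = pt p a b"
  then show ?thesis using pt_lt by auto
next
  fix m c assume "m < p" "c < p" "u = lnv p m c"
  then show ?thesis using lnv_ge[of p m c] by auto
qed

lemma Gp_noC4:
  assumes p: "prime p"
  shows "\<not> contains_subgraph (Gp p) C4"
proof
  assume "contains_subgraph (Gp p) C4"
  then obtain a b c d where cyc: "adj (Gp p) a b" "adj (Gp p) b c" "adj (Gp p) c d" "adj (Gp p) d a" "a \<noteq> c" "b \<noteq> d"
    "a \<in> verts (Gp p)" "b \<in> verts (Gp p)" "c \<in> verts (Gp p)" "d \<in> verts (Gp p)" by (rule C4_obtain)
  have B: "\<And>u w. adj (Gp p) u w \<Longrightarrow> (u \<in> {..<p*p} \<longleftrightarrow> w \<notin> {..<p*p})" using Gp_bip unfolding bip_def by blast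
  have sym: "\<And>u w. adj (Gp p) u w \<Longrightarrow> adj (Gp p) w u" using wf_sym[OF Gp_wf] by blast
  have key: False if P: "x \<in> {..<p*p}" "z \<in> {..<p*p}" "y \<notin> {..<p*p}" "t \<notin> {..<p*p}"
    "x \<in> verts (Gp p)" "z \<in> verts (Gp p)" "y \<in> verts (Gp p)" "t \<in> verts (Gp p)"
    "adj (Gp p) x y" "adj (Gp p) z y" "adj (Gp p) x t" "adj (Gp p) z t" "x \<noteq> z" "y \<noteq> t" for x y z t
  proof -
    obtain a1 a2 where A: "a1 < p" "a2 < p" "x = pt p a1 a2" using Gp_pt_or_ln[OF P(5)] P(1) by blast
    obtain c1 c2 where C: "c1 < p" "c2 < p" "z = pt p c1 c2" using Gp_pt_or_ln[OF P(6)] P(2) by blast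
    obtain m1 e1 where L1: "m1 < p" "e1 < p" "y = lnv p m1 e1" using Gp_pt_or_ln[OF P(7)] P(3) by blast
    obtain m2 e2 where L2: "m2 < p" "e2 < p" "t = lnv p m2 e2" using Gp_pt_or_ln[OF P(8)] P(4) by blast
    have i: "inc p a1 a2 m1 e1" "inc p a1 a2 m2 e2" "inc p c1 c2 m1 e1" "inc p c1 c2 m2 e2"
      using P(9-12) A C L1 L2 adj_pl by auto
    have ne: "(a1,a2) \<noteq> (c1,c2)" using P(13) A C by auto
    have "m1 = m2 \<and> e1 = e2" using two_lines[OF p A(1) C(1) A(2) C(2) L1(1) L2(1) L1(2) L2(2) i ne] .
    then show False using P(14) L1 L2 by simp
  qed
  show False
  proof (cases "a \<in> {..<p*p}")
    case True
    then have "b \<notin> {..<p*p}" "c \<in> {..<p*p}" "d \<notin> {..<p*p}" using B cyc by blast+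
    then show False using key[of a c b d] True cyc sym by blast
  next
    case False
    then have "b \<in> {..<p*p}" "c \<notin> {..<p*p}" "d \<in> {..<p*p}" using B cyc by blast+
    then show False using key[of b d c a] False cyc sym by blast
  qed
qed

lemma avoid_inj:
  assumes "inj_on f {..<n}" "finite S" "card S < n"
  shows "\<exists>j<n. f j \<notin> S"
proof (rule ccontr)
  assume "\<not> ?thesis"
  then have "f ` {..<n} \<subseteq> S" by auto
  then have "card (f ` {..<n}) \<le> card S" using assms(2) card_mono by blast
  then show False using card_image[OF assms(1)] assms(3) by simp
qed

lemma avoid_inj2:
  assumes f: "inj_on f M" and g: "inj_on g M" and S: "finite S" and M: "finite M" and c: "card M > 2 * card S"
  shows "\<exists>j\<in>M. f j \<notin> S \<and> g j \<notin> S"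
proof (rule ccontr)
  assume "\<not> ?thesis"
  then have sub: "M \<subseteq> {j\<in>M. f j \<in> S} \<union> {j\<in>M. g j \<in> S}" by auto
  have c1: "card {j\<in>M. f j \<in> S} \<le> card S"
    by (rule card_inj_on_le[OF inj_on_subset[OF f] _ S]) auto
  have c2: "card {j\<in>M. g j \<in> S} \<le> card S"
    by (rule card_inj_on_le[OF inj_on_subset[OF g] _ S]) auto
  have "card M \<le> card ({j\<in>M. f j \<in> S} \<union> {j\<in>M. g j \<in> S})" by (rule card_mono) (use M sub in auto)
  also have "\<dots> \<le> card {j\<in>M. f j \<in> S} + card {j\<in>M. g j \<in> S}" by (rule card_Un_le)
  finally show False using c1 c2 c by linarith
qed


lemma Gp_kconn:
  assumes p: "prime p" and k: "k \<ge> 1" and pk: "p \<ge> 2 * k + 7"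
  shows "k_connected k (Gp p)"
proof (rule k_connI[OF Gp_wf k])
  have p0: "p > 0" using pk by simp
  note ct = cthr_props[OF p0] and yo = yon_props[OF p0]
  have "p \<le> p * p" using p0 by simp
  then have "k < p * p" using pk by linarith
  then show "k < card (verts (Gp p))" by (simp add: Gp_verts)
  fix S assume S: "S \<subseteq> verts (Gp p)" "card S < k"
  have finS: "finite S" using S(1) finite_subset by (auto simp: Gp_verts)
  have cSp: "card S < p" using S pk by linarith
  let ?E = "(edge_rel (del_verts (Gp p) S))\<^sup>*"
  have PP: "(pt p a b, pt p a' b') \<in> ?E"
    if P: "a < p" "b < p" "pt p a b \<notin> S" and Q: "a' < p" "b' < p" "pt p a' b' \<notin> S" for a b a' b'
  proof -
    have inj1: "inj_on (\<lambda>m. lnv p m (cthr p a b m)) {..<p}" unfolding inj_on_def using lnv_inj ct by blast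
    obtain m where m: "m < p" "lnv p m (cthr p a b m) \<notin> S" using avoid_inj[OF inj1 finS cSp] by blast
    define c where "c = cthr p a b m"
    have c: "c < p" "inc p a b m c" using ct c_def by auto
    have L: "lnv p m c \<in> verts (Gp p)" "lnv p m c \<notin> S" using lnv_in m c c_def by auto
    have Pv: "pt p a b \<in> verts (Gp p)" "pt p a' b' \<in> verts (Gp p)" using pt_in P Q by auto
    have e1: "(pt p a b, lnv p m c) \<in> ?E" by (rule del_edge) (use Pv L P c m adj_pl in auto)
    show ?thesis
    proof (cases "inc p a' b' m c")
      case True
      have "(lnv p m c, pt p a' b') \<in> ?E" by (rule del_edge) (use Pv L Q c m adj_lp True in auto)
      then show ?thesis using e1 by (rule rtrancl_trans[rotated])
    next
      case False
      define cq where "cq m' = cthr p a' b' m'" for m'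
      have cq: "cq m' < p" "inc p a' b' m' (cq m')" for m' using ct cq_def by auto
      define R where "R m' = (SOME r. \<exists>x y. x < p \<and> y < p \<and> r = pt p x y \<and> inc p x y m c \<and> inc p x y m' (cq m'))" for m'
      have Rp: "\<exists>x y. x < p \<and> y < p \<and> R m' = pt p x y \<and> inc p x y m c \<and> inc p x y m' (cq m')"
        if mp: "m' < p" "m' \<noteq> m" for m'
      proof -
        obtain x y where "x < p" "y < p" "inc p x y m c" "inc p x y m' (cq m')"
          using intersect[OF p m(1) mp(1)] mp(2) by metis
        then have "\<exists>r. \<exists>x y. x < p \<and> y < p \<and> r = pt p x y \<and> inc p x y m c \<and> inc p x y m' (cq m')" by blast
        then show ?thesis unfolding R_def by (rule someI_ex)
      qed
      let ?M = "{..<p} - {m}"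
      have injR: "inj_on R ?M"
      proof (rule inj_onI)
        fix m1 m2 assume m1: "m1 \<in> ?M" and m2: "m2 \<in> ?M" and eq: "R m1 = R m2"
        obtain x1 y1 where r1: "x1 < p" "y1 < p" "R m1 = pt p x1 y1" "inc p x1 y1 m c" "inc p x1 y1 m1 (cq m1)"
          using Rp m1 by blast
        obtain x2 y2 where r2: "x2 < p" "y2 < p" "R m2 = pt p x2 y2" "inc p x2 y2 m c" "inc p x2 y2 m2 (cq m2)"
          using Rp m2 by blast
        have "x1 = x2 \<and> y1 = y2" using eq r1 r2 pt_inj by metis
        then have i2: "inc p x1 y1 m2 (cq m2)" using r2 by simp
        have ne: "(x1, y1) \<noteq> (a', b')" using r1(4) False by auto
        have "m1 = m2 \<and> cq m1 = cq m2"
          using two_lines[OF p r1(1) Q(1) r1(2) Q(2) _ _ cq(1) cq(1) r1(5) i2 cq(2) cq(2) ne] m1 m2 by auto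
        then show "m1 = m2" by simp
      qed
      have injL: "inj_on (\<lambda>m'. lnv p m' (cq m')) ?M" unfolding inj_on_def using lnv_inj cq by blast
      have cM: "card ?M = p - 1" using m(1) by simp
      have "card ?M > 2 * card S" using cM S pk by linarith
      then obtain m' where m': "m' \<in> ?M" "lnv p m' (cq m') \<notin> S" "R m' \<notin> S"
        using avoid_inj2[OF injL injR finS] by auto
      obtain x y where r: "x < p" "y < p" "R m' = pt p x y" "inc p x y m c" "inc p x y m' (cq m')"
        using Rp m' by blast
      have ml: "m' < p" using m' by simp
      have Rv: "pt p x y \<in> verts (Gp p)" "pt p x y \<notin> S" using pt_in r m' by auto
      have L'v: "lnv p m' (cq m') \<in> verts (Gp p)" using lnv_in ml cq by auto
      have e2: "(lnv p m c, pt p x y) \<in> ?E" by (rule del_edge) (use L Rv r c m adj_lp in auto)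
      have e3: "(pt p x y, lnv p m' (cq m')) \<in> ?E" by (rule del_edge) (use L'v Rv r cq ml m' adj_pl in auto)
      have e4: "(lnv p m' (cq m'), pt p a' b') \<in> ?E" by (rule del_edge) (use L'v Pv Q cq ml m' adj_lp in auto)
      show ?thesis using rtrancl_trans[OF rtrancl_trans[OF rtrancl_trans[OF e1 e2] e3] e4] .
    qed
  qed
  have injh: "inj_on (pt p 0) {..<p}" unfolding inj_on_def using pt_inj by blast
  obtain j0 where j0: "j0 < p" "pt p 0 j0 \<notin> S" using avoid_inj[OF injh finS cSp] by blast
  show "connected (del_verts (Gp p) S)"
  proof (rule hub_conn_del[OF Gp_wf])
    show "pt p 0 j0 \<in> verts (Gp p) - S" using pt_in j0 p0 by auto
    fix u assume u: "u \<in> verts (Gp p) - S"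
    show "(u, pt p 0 j0) \<in> ?E"
    proof (rule Gp_cases[of u p])
      show "u \<in> verts (Gp p)" using u by blast
      fix a b assume "a < p" "b < p" "u = pt p a b"
      then show ?thesis using PP[of a b 0 j0] u j0 p0 by auto
    next
      fix m c assume mc: "m < p" "c < p" "u = lnv p m c"
      have inj: "inj_on (\<lambda>x. pt p x (yon p m c x)) {..<p}" unfolding inj_on_def using pt_inj yo by blast
      obtain x where x: "x < p" "pt p x (yon p m c x) \<notin> S" using avoid_inj[OF inj finS cSp] by blast
      have y: "yon p m c x < p" "inc p x (yon p m c x) m c" using yo by auto
      have e: "(u, pt p x (yon p m c x)) \<in> ?E" by (rule del_edge) (use u mc x y pt_in adj_lp in auto)
      show ?thesis using rtrancl_trans[OF e PP[OF x(1) y(1) x(2), of 0 j0]] j0 p0 by blast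
    qed
  qed
qed


lemma rich_types: "rich G \<Longrightarrow> u \<in> verts G \<Longrightarrow> hasN G u \<and> hasNN G u"
  unfolding rich_def hasN_def hasNN_def by blast

lemma ev_P4: "eventually_defines nverts P4 PhiP4"
  unfolding eventually_defines_def
proof (intro conjI exI[of _ 4] allI impI)
  show "sentence PhiP4" by (rule PhiP4_props(1))
  fix G assume A: "wf_graph G \<and> connected G \<and> 4 \<le> nverts G"
  show "models G PhiP4 = contains_subgraph G P4"
    unfolding models_def PhiP4_sat using P4_char A by (simp add: nverts_def)
qed

lemma ev_C4: "eventually_defines kappa C4 PhiC4"
  unfolding eventually_defines_def
  using PhiC4_props PhiC4_models by blast

lemma star_facts: assumes "n \<ge> 3"
  shows "wf_graph (starG n)" "connected (starG n)" "wf_graph (starE n)" "connected (starE n)"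
    "verts (starG n) \<noteq> {}" "verts (starE n) \<noteq> {}"
  using assms starG_wf starG_conn starE_wf starE_conn by (auto simp: starG_simps starE_simps)

lemma P4_lower:
  assumes ev: "eventually_defines nverts P4 \<Phi>"
    and eq: "\<And>n. n \<ge> 3 \<Longrightarrow> models (starG n) \<Phi> = models (starE n) \<Phi>"
  shows False
proof -
  obtain k where k: "\<forall>G. wf_graph G \<and> connected G \<and> nverts G \<ge> k \<longrightarrow> (models G \<Phi> \<longleftrightarrow> contains_subgraph G P4)"
    using ev unfolding eventually_defines_def by blast
  let ?n = "k + 3"
  have n: "?n \<ge> 3" by simp
  have A: "wf_graph (starG ?n) \<and> connected (starG ?n) \<and> nverts (starG ?n) \<ge> k"
    using star_facts[OF n] star_nverts by simp
  have B: "wf_graph (starE ?n) \<and> connected (starE ?n) \<and> nverts (starE ?n) \<ge> k"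
    using star_facts[OF n] star_nverts by simp
  have "models (starG ?n) \<Phi> \<longleftrightarrow> contains_subgraph (starG ?n) P4"
    using k A by blast
  moreover have "models (starE ?n) \<Phi> \<longleftrightarrow> contains_subgraph (starE ?n) P4"
    using k B by blast
  ultimately show False using eq[OF n] starG_noP4 starE_P4[OF n] by simp
qed

lemma C4_graphs:
  obtains G H where "wf_graph G" "wf_graph H" "rich G" "rich H" "verts G \<noteq> {}" "verts H \<noteq> {}"
    "connected G" "connected H" "kappa G \<ge> k" "kappa H \<ge> k"
    "\<not> contains_subgraph G C4" "contains_subgraph H C4"
proof -
  obtain p where p: "prime p" "p > 2 * (k + 1) + 7" using bigger_prime by blast
  have pk: "p \<ge> 2 * (k + 1) + 7" "p \<ge> 7" using p by auto
  have kG: "k_connected (k + 1) (Gp p)" using Gp_kconn[OF p(1) _ pk(1)] by simp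
  have kH: "k_connected (k + 1) (Hg (k + 8))" using Hg_kconn[of "k + 1" "k + 8"] by simp
  have "rich (Gp p)" using Gp_rich[OF p(1) pk(2)] .
  moreover have "rich (Hg (k + 8))" using Hg_rich[of "k + 8"] by simp
  moreover have "connected (Gp p)" "connected (Hg (k + 8))" using kG kH unfolding k_connected_def by blast+
  moreover have "kappa (Gp p) \<ge> k" "kappa (Hg (k + 8)) \<ge> k" using kappa_ge[OF kG] kappa_ge[OF kH] by simp_all
  moreover have "verts (Gp p) \<noteq> {}" "verts (Hg (k + 8)) \<noteq> {}" using \<open>connected (Gp p)\<close> \<open>connected (Hg (k + 8))\<close>
    unfolding connected_def by blast+
  moreover have "\<not> contains_subgraph (Gp p) C4" using Gp_noC4[OF p(1)] .
  moreover have "contains_subgraph (Hg (k + 8)) C4" using Hg_C4[of "k + 8"] by simp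
  ultimately show ?thesis using that[OF Gp_wf Hg_wf] by blast
qed

lemma C4_lower:
  assumes ev: "eventually_defines kappa C4 \<Phi>"
    and eq: "\<And>G H. wf_graph G \<Longrightarrow> wf_graph H \<Longrightarrow> rich G \<Longrightarrow> rich H \<Longrightarrow> verts G \<noteq> {} \<Longrightarrow> verts H \<noteq> {}
       \<Longrightarrow> models G \<Phi> = models H \<Phi>"
  shows False
proof -
  obtain k where k: "\<forall>G. wf_graph G \<and> connected G \<and> kappa G \<ge> k \<longrightarrow> (models G \<Phi> \<longleftrightarrow> contains_subgraph G C4)"
    using ev unfolding eventually_defines_def by blast
  obtain G H where GH: "wf_graph G" "wf_graph H" "rich G" "rich H" "verts G \<noteq> {}" "verts H \<noteq> {}"
    "connected G" "connected H" "kappa G \<ge> k" "kappa H \<ge> k"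
    "\<not> contains_subgraph G C4" "contains_subgraph H C4" by (rule C4_graphs)
  have "models G \<Phi> \<longleftrightarrow> contains_subgraph G C4" using k GH by blast
  moreover have "models H \<Phi> \<longleftrightarrow> contains_subgraph H C4" using k GH by blast
  ultimately show False using eq[OF GH(1-6)] GH(11,12) by simp
qed

lemma sentence_img: "sentence \<Phi> \<Longrightarrow> (\<lambda>x. (a x, b x)) ` free_vars \<Phi> \<subseteq> {}"
  unfolding sentence_def by simp

theorem theorem13:
  shows "W_param nverts P4 = 2 \<and> D_param nverts P4 = 3
       \<and> D_param kappa C4 = 4 \<and> W_param kappa C4 \<ge> 3"
proof (intro conjI)
  show "W_param nverts P4 = 2"
    unfolding W_param_def
  proof (rule Least_equality)
    show "\<exists>\<Phi>. eventually_defines nverts P4 \<Phi> \<and> width \<Phi> = 2" using ev_P4 PhiP4_props by blast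
    fix w assume "\<exists>\<Phi>. eventually_defines nverts P4 \<Phi> \<and> width \<Phi> = w"
    then obtain \<Phi> where \<Phi>: "eventually_defines nverts P4 \<Phi>" "width \<Phi> = w" by blast
    show "2 \<le> w"
    proof (rule ccontr)
      assume "\<not> 2 \<le> w"
      then have w1: "width \<Phi> \<le> 1" using \<Phi> by simp
      have s: "sentence \<Phi>" using \<Phi> unfolding eventually_defines_def by blast
      show False
      proof (rule P4_lower[OF \<Phi>(1)])
        fix n :: nat assume n: "n \<ge> 3"
        show "models (starG n) \<Phi> = models (starE n) \<Phi>"
          by (rule models_eq, rule width1_equiv) (use star_facts[OF n] w1 s in auto)
      qed
    qed
  qed
  show "D_param nverts P4 = 3"
    unfolding D_param_def
  proof (rule Least_equality)
    show "\<exists>\<Phi>. eventually_defines nverts P4 \<Phi> \<and> qdepth \<Phi> = 3" using ev_P4 PhiP4_props by blast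
    fix d assume "\<exists>\<Phi>. eventually_defines nverts P4 \<Phi> \<and> qdepth \<Phi> = d"
    then obtain \<Phi> where \<Phi>: "eventually_defines nverts P4 \<Phi>" "qdepth \<Phi> = d" by blast
    show "3 \<le> d"
    proof (rule ccontr)
      assume "\<not> 3 \<le> d"
      then have d2: "qdepth \<Phi> \<le> 2" using \<Phi> by simp
      have s: "sentence \<Phi>" using \<Phi> unfolding eventually_defines_def by blast
      show False
      proof (rule P4_lower[OF \<Phi>(1)])
        fix n :: nat assume n: "n \<ge> 3"
        show "models (starG n) \<Phi> = models (starE n) \<Phi>"
          by (rule models_eq, rule depth_lemma[OF star_win2[OF n] d2 sentence_img[OF s]])
      qed
    qed
  qed
  show "D_param kappa C4 = 4"
    unfolding D_param_def
  proof (rule Least_equality)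
    show "\<exists>\<Phi>. eventually_defines kappa C4 \<Phi> \<and> qdepth \<Phi> = 4" using ev_C4 PhiC4_props by blast
    fix d assume "\<exists>\<Phi>. eventually_defines kappa C4 \<Phi> \<and> qdepth \<Phi> = d"
    then obtain \<Phi> where \<Phi>: "eventually_defines kappa C4 \<Phi>" "qdepth \<Phi> = d" by blast
    show "4 \<le> d"
    proof (rule ccontr)
      assume "\<not> 4 \<le> d"
      then have d3: "qdepth \<Phi> \<le> 3" using \<Phi> by simp
      have s: "sentence \<Phi>" using \<Phi> unfolding eventually_defines_def by blast
      show False
      proof (rule C4_lower[OF \<Phi>(1)])
        fix G H assume GH: "wf_graph G" "wf_graph H" "rich G" "rich H" "verts G \<noteq> {}" "verts H \<noteq> {}"
        show "models G \<Phi> = models H \<Phi>"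
          by (rule models_eq, rule depth_lemma[OF win3_rich[OF GH] d3 sentence_img[OF s]])
      qed
    qed
  qed
  show "W_param kappa C4 \<ge> 3"
    unfolding W_param_def
  proof (rule LeastI2_ex)
    show "\<exists>w \<Phi>. eventually_defines kappa C4 \<Phi> \<and> width \<Phi> = w" using ev_C4 by blast
    fix w assume "\<exists>\<Phi>. eventually_defines kappa C4 \<Phi> \<and> width \<Phi> = w"
    then obtain \<Phi> where \<Phi>: "eventually_defines kappa C4 \<Phi>" "width \<Phi> = w" by blast
    show "3 \<le> w"
    proof (rule ccontr)
      assume "\<not> 3 \<le> w"
      then have w2: "width \<Phi> \<le> 2" using \<Phi> by simp
      have s: "sentence \<Phi>" using \<Phi> unfolding eventually_defines_def by blast
      show False
      proof (rule C4_lower[OF \<Phi>(1)])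
        fix G H assume GH: "wf_graph G" "wf_graph H" "rich G" "rich H" "verts G \<noteq> {}" "verts H \<noteq> {}"
        show "models G \<Phi> = models H \<Phi>"
          by (rule models_eq, rule width2_equiv[OF GH(1,2,5,6) _ _ w2 s]) (use rich_types GH in auto)
      qed
    qed
  qed
qed


end
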